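(* Let $\mathcal{I}$ be a suitable and well-separated collection of pairwise disjoint intervals in $\mathbb{R}/2\pi\mathbb{Z}$, and let $\alpha:\mathcal{I}\to\{-1,1\}$ be a symmetric colouring with $\hat\varepsilon\in[-1,1]^{S_o}$. Then $|\hat s_\alpha(\theta)|\ge\frac{2K\sqrt{n}}{3}$ for every $\theta\in\bigcup_{I\in\mathcal{I}}I$, and $|\hat s_\alpha(\theta)|\le5K\sqrt{n}$ for every $\theta\in\mathbb{R}$.
   Context: Standing setup: $n$ is a sufficiently large positive integer, $t$ is an odd integer such that $\gamma:=(2^{t+11}+2^t-1)/n$ satisfies $2^{-43}<\gamma\le2^{-40}$. A collection $\mathcal{I}$ of pairwise disjoint intervals in $\mathbb{R}/2\pi\mathbb{Z}$ is suitable if (a) endpoints of each interval lie in $\frac{\pi}{n}\mathbb{Z}$; (b) $\mathcal{I}$ is invariant under $\theta\mapsto\pi+\theta$ and $\theta\mapsto\pi-\theta$; (c) $|\mathcal{I}|=4N$ for some integer $N\le\gamma n$. It is well-separated if moreover (d) $|I|\le6\pi/n$ for each $I\in\mathcal{I}$; (e) $d(I,J)\ge\pi/n$ for distinct $I,J\in\mathcal{I}$ (distance mod $2\pi$, infimum over points); (f) $\bigcup_{I\in\mathcal{I}}I$ is disjoint from $(\pi/2)\mathbb{Z}+[-100\pi/n,100\pi/n]$. A colouring $\alpha:\mathcal{I}\to\{-1,1\}$ is symmetric if $\alpha(I')=\alpha(I)$ whenever $I'=\pi-I$ and $\alpha(I')=-\alpha(I)$ whenever $I'=\pi+I$. Let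 $S_o:=\{1,3,\dots,2n-1\}$, $K:=2^7$, $g_\alpha(\theta):=\sum_{I\in\mathcal{I}}\alpha(I)\mathbf{1}[\theta\in I]$, $\hat\varepsilon_j:=K\sqrt{n}\int_{-\pi}^{\pi}g_\alpha(\theta)\sin(j\theta)\,d\theta$ for $j\in S_o$, and $\hat s_\alpha(\theta):=\sum_{j\in S_o}\hat\varepsilon_j\sin(j\theta)$. *)

theory Defs
  imports "HOL-Analysis.Analysis"
begin

text \<open>A closed interval of the circle R/2piZ, represented as its 2pi-periodic preimage in R:
  the points congruent mod 2pi to a point of [a,b].\<close>
definition arc :: "real \<Rightarrow> real \<Rightarrow> real set" where
  "arc a b = {\<theta>. \<exists>k::int. a \<le> \<theta> + 2 * pi * of_int k \<and> \<theta> + 2 * pi * of_int k \<le> b}"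

definition is_arc :: "real set \<Rightarrow> bool" where
  "is_arc I \<longleftrightarrow> (\<exists>a b. a < b \<and> b - a < 2 * pi \<and> I = arc a b)"

definition arc_endpoints_in :: "nat \<Rightarrow> real set \<Rightarrow> bool" where
  "arc_endpoints_in n I \<longleftrightarrow> (\<exists>a b. a < b \<and> b - a < 2 * pi \<and> I = arc a b \<and>
      (\<exists>p::int. a = of_int p * pi / real n) \<and> (\<exists>q::int. b = of_int q * pi / real n))"

definition arc_length_le :: "real \<Rightarrow> real set \<Rightarrow> bool" where
  "arc_length_le L I \<longleftrightarrow> (\<exists>a b. a < b \<and> b - a < 2 * pi \<and> I = arc a b \<and> b - a \<le> L)"

definition gamma :: "nat \<Rightarrow> int \<Rightarrow> real" where
  "gamma n t = (2 powr (real_of_int t + 11) + 2 powr (real_of_int t) - 1) / real n"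

definition suitable :: "nat \<Rightarrow> int \<Rightarrow> real set set \<Rightarrow> bool" where
  "suitable n t \<I> \<longleftrightarrow>
     finite \<I> \<and> (\<forall>I\<in>\<I>. is_arc I) \<and>
     (\<forall>I\<in>\<I>. \<forall>J\<in>\<I>. I \<noteq> J \<longrightarrow> I \<inter> J = {}) \<and>
     (\<forall>I\<in>\<I>. arc_endpoints_in n I) \<and>
     (\<forall>I\<in>\<I>. (\<lambda>\<theta>. pi + \<theta>) ` I \<in> \<I> \<and> (\<lambda>\<theta>. pi - \<theta>) ` I \<in> \<I>) \<and>
     (\<exists>N::nat. card \<I> = 4 * N \<and> real N \<le> gamma n t * real n)"

definition well_separated :: "nat \<Rightarrow> int \<Rightarrow> real set set \<Rightarrow> bool" where
  "well_separated n t \<I> \<longleftrightarrow>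
     suitable n t \<I> \<and>
     (\<forall>I\<in>\<I>. arc_length_le (6 * pi / real n) I) \<and>
     (\<forall>I\<in>\<I>. \<forall>J\<in>\<I>. I \<noteq> J \<longrightarrow> (\<forall>x\<in>I. \<forall>y\<in>J. \<bar>x - y\<bar> \<ge> pi / real n)) \<and>
     (\<forall>I\<in>\<I>. \<forall>\<theta>\<in>I. \<forall>m::int. \<bar>\<theta> - of_int m * pi / 2\<bar> > 100 * pi / real n)"

definition symmetric_colouring :: "real set set \<Rightarrow> (real set \<Rightarrow> real) \<Rightarrow> bool" where
  "symmetric_colouring \<I> \<alpha> \<longleftrightarrow>
     (\<forall>I\<in>\<I>. \<alpha> I \<in> {-1, 1}) \<and>
     (\<forall>I\<in>\<I>. \<alpha> ((\<lambda>\<theta>. pi - \<theta>) ` I) = \<alpha> I) \<and>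
     (\<forall>I\<in>\<I>. \<alpha> ((\<lambda>\<theta>. pi + \<theta>) ` I) = - \<alpha> I)"

definition S_o :: "nat \<Rightarrow> nat set" where
  "S_o n = {j. odd j \<and> 1 \<le> j \<and> j \<le> 2 * n - 1}"

definition K :: real where "K = 2 ^ 7"

definition g_col :: "real set set \<Rightarrow> (real set \<Rightarrow> real) \<Rightarrow> real \<Rightarrow> real" where
  "g_col \<I> \<alpha> \<theta> = (\<Sum>I\<in>\<I>. \<alpha> I * indicator I \<theta>)"

definition eps_hat :: "nat \<Rightarrow> real set set \<Rightarrow> (real set \<Rightarrow> real) \<Rightarrow> nat \<Rightarrow> real" where
  "eps_hat n \<I> \<alpha> j = K * sqrt (real n) * integral {-pi..pi} (\<lambda>\<theta>. g_col \<I> \<alpha> \<theta> * sin (real j * \<theta>))"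

definition s_hat :: "nat \<Rightarrow> real set set \<Rightarrow> (real set \<Rightarrow> real) \<Rightarrow> real \<Rightarrow> real" where
  "s_hat n \<I> \<alpha> \<theta> = (\<Sum>j\<in>S_o n. eps_hat n \<I> \<alpha> j * sin (real j * \<theta>))"

end

theory Submission
  imports Defs
begin


section \<open>Taylor bounds\<close>

lemma cos_ge_2: "(x::real) \<ge> 0 \<Longrightarrow> cos x \<ge> 1 - x^2/2"
proof -
  assume x: "x \<ge> 0"
  let ?f = "\<lambda>u::real. cos u - (1 - u^2/2)"
  have "?f 0 \<le> ?f x"
  proof (rule DERIV_nonneg_imp_nondecreasing[OF x])
    fix u assume u: "0 \<le> u" "u \<le> x"
    show "\<exists>y. (?f has_real_derivative y) (at u) \<and> 0 \<le> y"
      by (rule exI[of _ "u - sin u"]) (auto intro!: derivative_eq_intros simp: sin_x_le_x u)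
  qed
  then show ?thesis by simp
qed

lemma sin_ge_3: "(x::real) \<ge> 0 \<Longrightarrow> sin x \<ge> x - x^3/6"
proof -
  assume x: "x \<ge> 0"
  let ?f = "\<lambda>u::real. sin u - (u - u^3/6)"
  have "?f 0 \<le> ?f x"
  proof (rule DERIV_nonneg_imp_nondecreasing[OF x])
    fix u assume u: "0 \<le> u" "u \<le> x"
    show "\<exists>y. (?f has_real_derivative y) (at u) \<and> 0 \<le> y"
      by (rule exI[of _ "cos u - (1 - u^2/2)"]) (auto intro!: derivative_eq_intros simp: cos_ge_2 u)
  qed
  then show ?thesis by simp
qed

lemma cos_le_4: "(x::real) \<ge> 0 \<Longrightarrow> cos x \<le> 1 - x^2/2 + x^4/24"
proof -
  assume x: "x \<ge> 0"
  let ?f = "\<lambda>u::real. (1 - u^2/2 + u^4/24) - cos u"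
  have "?f 0 \<le> ?f x"
  proof (rule DERIV_nonneg_imp_nondecreasing[OF x])
    fix u assume u: "0 \<le> u" "u \<le> x"
    show "\<exists>y. (?f has_real_derivative y) (at u) \<and> 0 \<le> y"
      by (rule exI[of _ "sin u - (u - u^3/6)"]) (auto intro!: derivative_eq_intros simp: sin_ge_3 u)
  qed
  then show ?thesis by simp
qed

lemma sin_le_5: "(x::real) \<ge> 0 \<Longrightarrow> sin x \<le> x - x^3/6 + x^5/120"
proof -
  assume x: "x \<ge> 0"
  let ?f = "\<lambda>u::real. (u - u^3/6 + u^5/120) - sin u"
  have "?f 0 \<le> ?f x"
  proof (rule DERIV_nonneg_imp_nondecreasing[OF x])
    fix u assume u: "0 \<le> u" "u \<le> x"
    show "\<exists>y. (?f has_real_derivative y) (at u) \<and> 0 \<le> y"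
      by (rule exI[of _ "(1 - u^2/2 + u^4/24) - cos u"]) (auto intro!: derivative_eq_intros simp: cos_le_4 u)
  qed
  then show ?thesis by simp
qed

lemma cos_ge_6: "(x::real) \<ge> 0 \<Longrightarrow> cos x \<ge> 1 - x^2/2 + x^4/24 - x^6/720"
proof -
  assume x: "x \<ge> 0"
  let ?f = "\<lambda>u::real. cos u - (1 - u^2/2 + u^4/24 - u^6/720)"
  have "?f 0 \<le> ?f x"
  proof (rule DERIV_nonneg_imp_nondecreasing[OF x])
    fix u assume u: "0 \<le> u" "u \<le> x"
    show "\<exists>y. (?f has_real_derivative y) (at u) \<and> 0 \<le> y"
      by (rule exI[of _ "(u - u^3/6 + u^5/120) - sin u"]) (auto intro!: derivative_eq_intros simp: sin_le_5 u)
  qed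
  then show ?thesis by simp
qed

lemma sin_ge_7: "(x::real) \<ge> 0 \<Longrightarrow> sin x \<ge> x - x^3/6 + x^5/120 - x^7/5040"
proof -
  assume x: "x \<ge> 0"
  let ?f = "\<lambda>u::real. sin u - (u - u^3/6 + u^5/120 - u^7/5040)"
  have "?f 0 \<le> ?f x"
  proof (rule DERIV_nonneg_imp_nondecreasing[OF x])
    fix u assume u: "0 \<le> u" "u \<le> x"
    show "\<exists>y. (?f has_real_derivative y) (at u) \<and> 0 \<le> y"
      by (rule exI[of _ "cos u - (1 - u^2/2 + u^4/24 - u^6/720)"]) (auto intro!: derivative_eq_intros simp: cos_ge_6 u)
  qed
  then show ?thesis by simp
qed

section \<open>The partial sum P\<close>

definition Pf :: "nat \<Rightarrow> real \<Rightarrow> real" where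
  "Pf n x = (\<Sum>k<n. sin (real (2*k+1) * x) / real (2*k+1))"

definition Dk :: "nat \<Rightarrow> real \<Rightarrow> real" where
  "Dk n x = (\<Sum>k<n. cos (real (2*k+1) * x))"

lemma sin_scaled_deriv: "c \<noteq> 0 \<Longrightarrow> ((\<lambda>x. sin (c * x) / c) has_real_derivative cos (c * x)) (at x)"
  by (auto intro!: derivative_eq_intros simp: field_simps)

lemma Pf_deriv: "(Pf n has_real_derivative Dk n x) (at x)"
  unfolding Pf_def Dk_def
  by (rule DERIV_sum) (rule sin_scaled_deriv, simp)

lemma Pf_cont: "continuous_on S (Pf n)"
  by (meson DERIV_isCont Pf_deriv continuous_at_imp_continuous_on)

lemma Pf_cont_comp [continuous_intros]: "continuous_on S f \<Longrightarrow> continuous_on S (\<lambda>x. Pf n (f x))"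
  using continuous_on_compose2[OF Pf_cont[of UNIV n]] by auto

lemma Dk_closed: "2 * sin x * Dk n x = sin (2 * real n * x)"
proof (induction n)
  case 0 then show ?case by (simp add: Dk_def)
next
  case (Suc n)
  have d: "Dk (Suc n) x = Dk n x + cos (real (2*n+1) * x)" by (simp add: Dk_def)
  have "2 * sin x * Dk (Suc n) x = 2 * sin x * Dk n x + 2 * sin x * cos (real (2*n+1) * x)"
    unfolding d by (simp add: algebra_simps)
  also have "2 * sin x * Dk n x = sin (2 * real n * x)" by (rule Suc)
  also have "2 * sin x * cos (real (2*n+1) * x) = sin (real (2*n+2) * x) - sin (real (2*n) * x)"
  proof -
    have a: "real (2*n+2) * x = real (2*n+1) * x + x" by (simp add: algebra_simps)
    have b: "real (2*n) * x = real (2*n+1) * x - x" by (simp add: algebra_simps)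
    have g: "2 * sin x * cos y = sin (y + x) - sin (y - x)" for y
      by (simp add: sin_add sin_diff)
    show ?thesis unfolding a b by (rule g)
  qed
  also have "sin (2 * real n * x) + (sin (real (2*n+2) * x) - sin (real (2*n) * x)) = sin (real (2*n+2) * x)"
    by (simp add: mult.assoc)
  also have "real (2*n+2) * x = 2 * real (Suc n) * x" by simp
  finally show ?case .
qed

lemma Pf_0 [simp]: "Pf n 0 = 0" by (simp add: Pf_def)

lemma Pf_neg: "Pf n (-x) = - Pf n x"
  by (simp add: Pf_def sum_negf[symmetric])

lemma sin_add_2pi_int: "sin (y + 2 * pi * of_int j) = sin y"
  by (simp add: sin_add)

lemma cos_add_2pi_int: "cos (y + 2 * pi * of_int j) = cos y"
  by (simp add: cos_add)

lemma Pf_pi: "Pf n (x + pi) = - Pf n x"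
proof -
  have "sin (real (2*k+1) * (x + pi)) = - sin (real (2*k+1) * x)" for k
  proof -
    have e: "real (2*k+1) * (x + pi) = real (2*k+1) * x + real (2*k+1) * pi" by (simp add: algebra_simps)
    have c: "cos (real (2*k+1) * pi) = -1" using cos_npi[of "2*k+1"] by simp
    have s: "sin (real (2*k+1) * pi) = 0" using sin_npi[of "2*k+1"] by simp
    show ?thesis unfolding e sin_add c s by simp
  qed
  then show ?thesis by (simp add: Pf_def sum_negf[symmetric])
qed

lemma Pf_per: "Pf n (x + 2 * pi * of_int m) = Pf n x"
proof -
  have "sin (real (2*k+1) * (x + 2 * pi * of_int m)) = sin (real (2*k+1) * x)" for k
  proof -
    have e: "real (2*k+1) * (x + 2 * pi * of_int m) = real (2*k+1) * x + 2 * pi * of_int (int (2*k+1) * m)"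
      by (simp add: algebra_simps)
    show ?thesis by (simp only: e sin_add_2pi_int)
  qed
  then show ?thesis by (simp add: Pf_def)
qed

lemma Dk_formula: "sin x \<noteq> 0 \<Longrightarrow> Dk n x = sin (2 * real n * x) / (2 * sin x)"
  using Dk_closed[of x n] by (simp add: field_simps)



definition xk :: "nat \<Rightarrow> nat \<Rightarrow> real" where "xk n m = real m * pi / (2 * real n)"

lemma xk_mono: "a \<le> b \<Longrightarrow> xk n a \<le> xk n b"
  unfolding xk_def by (intro divide_right_mono mult_right_mono) auto

lemma xk_nonneg: "xk n a \<ge> 0"
  unfolding xk_def by simp

lemma xk_n: "n > 0 \<Longrightarrow> xk n n = pi / 2"
  unfolding xk_def by simp

lemma sin_sign_lobe:
  assumes "real m * pi < y" "y < real (Suc m) * pi"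
  shows "(-1)^m * sin y > 0"
proof -
  have e: "y = (y - real m * pi) + real m * pi" by simp
  have "sin y = (-1)^m * sin (y - real m * pi)"
    by (subst e, simp only: sin_add sin_npi cos_npi) simp
  moreover have "sin (y - real m * pi) > 0"
    using assms by (intro sin_gt_zero) (auto simp: algebra_simps)
  ultimately show ?thesis by (simp add: power_mult_distrib[symmetric])
qed

lemma Dk_sign:
  assumes n: "n \<ge> 1" and m: "Suc m \<le> n" and t: "xk n m < t" "t < xk n (Suc m)"
  shows "(-1)^m * Dk n t > 0"
proof -
  have np: "real n > 0" using n by simp
  have "xk n m \<ge> 0" unfolding xk_def using np by simp
  then have t0: "t > 0" using t(1) by linarith
  have "xk n (Suc m) \<le> xk n n" using m by (rule xk_mono)
  also have "xk n n = pi / 2" using n by (simp add: xk_n)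
  finally have t2: "t < pi/2" using t by simp
  have st: "sin t > 0" using t0 t2 by (intro sin_gt_zero) auto
  have "real m * pi < 2 * real n * t" "2 * real n * t < real (Suc m) * pi"
    using t np by (auto simp: xk_def field_simps)
  then have "(-1)^m * sin (2 * real n * t) > 0" by (rule sin_sign_lobe)
  then show ?thesis using st by (simp add: Dk_formula divide_pos_pos mult.assoc[symmetric] del: of_nat_Suc)
qed

lemma lobe_mono:
  assumes n: "n \<ge> 1" and m: "Suc m \<le> n" and t: "xk n m \<le> t" "t \<le> xk n (Suc m)"
  shows "(-1)^m * Pf n (xk n m) \<le> (-1)^m * Pf n t \<and> (-1)^m * Pf n t \<le> (-1)^m * Pf n (xk n (Suc m))"
proof -
  let ?f = "\<lambda>x. (-1)^m * Pf n x"
  have cont: "continuous_on S ?f" for S by (intro continuous_intros Pf_cont)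
  have der: "\<exists>y. (?f has_real_derivative y) (at x) \<and> y \<ge> 0" if "xk n m < x" "x < xk n (Suc m)" for x
    using Dk_sign[OF n m that] by (intro exI[of _ "(-1)^m * Dk n x"]) (auto intro!: derivative_eq_intros Pf_deriv)
  have "?f (xk n m) \<le> ?f t"
    by (rule DERIV_nonneg_imp_increasing_open[OF t(1) _ cont]) (use der t in auto)
  moreover have "?f t \<le> ?f (xk n (Suc m))"
    by (rule DERIV_nonneg_imp_increasing_open[OF t(2) _ cont]) (use der t in auto)
  ultimately show ?thesis by simp
qed

lemma xk_Suc: "n > 0 \<Longrightarrow> xk n (Suc m) = xk n m + pi / (2 * real n)"
  unfolding xk_def by (simp add: field_simps)

lemma Q_step:
  assumes n: "n \<ge> 1" and m: "Suc (Suc m) \<le> n"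
  shows "(-1)^m * Pf n (xk n m) \<le> (-1)^m * Pf n (xk n (Suc (Suc m)))"
proof -
  define d where "d = pi / (2 * real n)"
  have np: "real n > 0" using n by simp
  let ?Q = "\<lambda>x. (-1)^m * (Pf n x + Pf n (x + d))"
  have cont: "continuous_on S ?Q" for S by (intro continuous_intros Pf_cont)
  have der: "\<exists>y. (?Q has_real_derivative y) (at x) \<and> y \<ge> 0" if x: "xk n m < x" "x < xk n (Suc m)" for x
  proof -
    have x0: "x > 0" using x xk_nonneg[of n m] by linarith
    have xd: "x + d < xk n (Suc (Suc m))" using x xk_Suc[of n "Suc m"] np unfolding d_def by simp
    have "xk n (Suc (Suc m)) \<le> xk n n" using m by (rule xk_mono)
    then have xd2: "x + d < pi / 2" using xd xk_n[of n] np by simp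
    have dpos: "d > 0" unfolding d_def using np by simp
    have s1: "sin x > 0" using x0 xd2 dpos by (intro sin_gt_zero) auto
    have s12: "sin x \<le> sin (x + d)" using x0 xd2 dpos by (intro sin_monotone_2pi_le) auto
    have s2: "sin (x + d) > 0" using s1 s12 by linarith
    have e2: "sin (2 * real n * (x + d)) = - sin (2 * real n * x)"
    proof -
      have "2 * real n * (x + d) = 2 * real n * x + pi" unfolding d_def using np by (simp add: field_simps)
      then show ?thesis by simp
    qed
    have D1: "Dk n x = sin (2 * real n * x) / (2 * sin x)" using s1 by (simp add: Dk_formula)
    have D2: "Dk n (x + d) = - sin (2 * real n * x) / (2 * sin (x + d))"
      using s2 by (simp add: Dk_formula e2)
    have sg: "(-1)^m * sin (2 * real n * x) > 0"
    proof -
      have "real m * pi < 2 * real n * x" "2 * real n * x < real (Suc m) * pi"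
        using x np by (auto simp: xk_def field_simps)
      then show ?thesis by (rule sin_sign_lobe)
    qed
    have inv: "1 / (2 * sin x) - 1 / (2 * sin (x + d)) \<ge> 0"
      using s1 s12 by (simp add: frac_le)
    have "(-1)^m * (Dk n x + Dk n (x + d)) = ((-1)^m * sin (2 * real n * x)) * (1 / (2 * sin x) - 1 / (2 * sin (x + d)))"
      unfolding D1 D2 by (simp add: field_simps)
    also have "\<dots> \<ge> 0" using sg inv by simp
    finally have "(-1)^m * (Dk n x + Dk n (x + d)) \<ge> 0" .
    moreover have "(?Q has_real_derivative (-1)^m * (Dk n x + Dk n (x + d))) (at x)"
      by (auto intro!: derivative_eq_intros Pf_deriv[THEN DERIV_chain2] simp: Pf_deriv)
    ultimately show ?thesis by blast
  qed
  have le: "xk n m \<le> xk n (Suc m)" by (rule xk_mono) simp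
  have "?Q (xk n m) \<le> ?Q (xk n (Suc m))"
    by (rule DERIV_nonneg_imp_increasing_open[OF le _ cont]) (use der in auto)
  moreover have "xk n m + d = xk n (Suc m)" "xk n (Suc m) + d = xk n (Suc (Suc m))"
    using xk_Suc np unfolding d_def by auto
  ultimately show ?thesis by (simp add: algebra_simps)
qed

lemma lobe_even:
  assumes n: "n \<ge> 1"
  shows "2*i \<le> n \<Longrightarrow> 0 \<le> Pf n (xk n (2*i)) \<and> (i \<ge> 1 \<longrightarrow> Pf n (xk n 2) \<le> Pf n (xk n (2*i)))"
proof (induction i)
  case 0 then show ?case by (simp add: xk_def)
next
  case (Suc i)
  have "(-1)^(2*i) * Pf n (xk n (2*i)) \<le> (-1)^(2*i) * Pf n (xk n (Suc (Suc (2*i))))"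
    by (rule Q_step[OF n]) (use Suc.prems in simp)
  then have "Pf n (xk n (2*i)) \<le> Pf n (xk n (2 * Suc i))" by simp
  with Suc show ?case by (cases "i = 0") auto
qed

lemma lobe_odd:
  assumes n: "n \<ge> 1"
  shows "2*i+1 \<le> n \<Longrightarrow> Pf n (xk n (2*i+1)) \<le> Pf n (xk n 1)"
proof (induction i)
  case 0 then show ?case by simp
next
  case (Suc i)
  have "(-1)^(2*i+1) * Pf n (xk n (2*i+1)) \<le> (-1)^(2*i+1) * Pf n (xk n (Suc (Suc (2*i+1))))"
    by (rule Q_step[OF n]) (use Suc.prems in simp)
  then have "Pf n (xk n (2 * Suc i + 1)) \<le> Pf n (xk n (2*i+1))" by simp
  with Suc show ?case by simp
qed

lemma lobe_exists:
  assumes n: "n \<ge> 1" and t: "0 \<le> t" "t \<le> pi / 2"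
  obtains m where "Suc m \<le> n" "xk n m \<le> t" "t \<le> xk n (Suc m)"
proof -
  define d where "d = pi / (2 * real n)"
  have np: "real n > 0" using n by simp
  have dp: "d > 0" unfolding d_def using np by simp
  have xkd: "xk n k = real k * d" for k unfolding xk_def d_def by simp
  define r where "r = t / d"
  have r0: "0 \<le> r" unfolding r_def using t dp by simp
  have rn: "r \<le> real n" unfolding r_def using t dp np by (simp add: d_def field_simps)
  define m0 where "m0 = nat \<lfloor>r\<rfloor>"
  have m0a: "real m0 \<le> r" unfolding m0_def using r0 by linarith
  have m0b: "r < real m0 + 1" unfolding m0_def using r0 by linarith
  show ?thesis
  proof (cases "m0 < n")
    case True
    show ?thesis
    proof (rule that[of m0])
      show "Suc m0 \<le> n" using True by simp
      show "xk n m0 \<le> t" unfolding xkd using m0a dp unfolding r_def by (simp add: field_simps)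
      show "t \<le> xk n (Suc m0)" unfolding xkd using m0b dp unfolding r_def by (simp add: field_simps)
    qed
  next
    case False
    then have "real n \<le> real m0" by simp
    then have "real m0 = real n" using m0a rn by linarith
    show ?thesis
    proof (rule that[of "n - 1"])
      show "Suc (n - 1) \<le> n" using n by simp
      have "real (n - 1) \<le> r" using n rn \<open>real m0 = real n\<close> m0a by (simp add: of_nat_diff)
      then show "xk n (n - 1) \<le> t" unfolding xkd using dp unfolding r_def by (simp add: field_simps)
      show "t \<le> xk n (Suc (n - 1))" unfolding xkd using rn dp n unfolding r_def by (simp add: field_simps)
    qed
  qed
qed

lemma P_range:
  assumes n: "n \<ge> 2" and t: "0 \<le> t" "t \<le> pi / 2"
  shows "0 \<le> Pf n t" "Pf n t \<le> Pf n (xk n 1)" "xk n 1 \<le> t \<Longrightarrow> Pf n (xk n 2) \<le> Pf n t"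
proof -
  have n1: "n \<ge> 1" using n by simp
  obtain m where m: "Suc m \<le> n" "xk n m \<le> t" "t \<le> xk n (Suc m)"
    using lobe_exists[OF n1 t] by blast
  have L: "(-1)^m * Pf n (xk n m) \<le> (-1)^m * Pf n t \<and> (-1)^m * Pf n t \<le> (-1)^m * Pf n (xk n (Suc m))"
    by (rule lobe_mono[OF n1 m])
  have x12: "Pf n (xk n 2) \<le> Pf n (xk n 1)"
    using lobe_mono[OF n1, of 1 "xk n 2"] n xk_mono[of 1 2 n] by (simp add: numeral_2_eq_2)
  have "0 \<le> Pf n t \<and> Pf n t \<le> Pf n (xk n 1) \<and> (xk n 1 \<le> t \<longrightarrow> Pf n (xk n 2) \<le> Pf n t)"
  proof (cases "even m")
    case True
    then obtain i where i: "m = 2*i" by blast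
    have a: "Pf n (xk n (2*i)) \<le> Pf n t" "Pf n t \<le> Pf n (xk n (2*i+1))" using L i by auto
    have b: "0 \<le> Pf n (xk n (2*i)) \<and> (i \<ge> 1 \<longrightarrow> Pf n (xk n 2) \<le> Pf n (xk n (2*i)))"
      by (rule lobe_even[OF n1]) (use m i in simp)
    have c: "Pf n (xk n (2*i+1)) \<le> Pf n (xk n 1)" by (rule lobe_odd[OF n1]) (use m i in simp)
    have d: "xk n 1 \<le> t \<Longrightarrow> Pf n (xk n 2) \<le> Pf n t"
    proof -
      assume t1: "xk n 1 \<le> t"
      show ?thesis
      proof (cases "i = 0")
        case True
        then have "t = xk n 1" using m t1 i by simp
        then show ?thesis using x12 by simp
      next
        case False then show ?thesis using a b by simp
      qed
    qed
    show ?thesis using a b c d by linarith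
  next
    case False
    then obtain i where i: "m = 2*i+1" using oddE by blast
    have a: "Pf n (xk n (2*(i+1))) \<le> Pf n t" "Pf n t \<le> Pf n (xk n (2*i+1))" using L i by auto
    have b: "0 \<le> Pf n (xk n (2*(i+1))) \<and> (i+1 \<ge> 1 \<longrightarrow> Pf n (xk n 2) \<le> Pf n (xk n (2*(i+1))))"
      by (rule lobe_even[OF n1]) (use m i in simp)
    have c: "Pf n (xk n (2*i+1)) \<le> Pf n (xk n 1)" by (rule lobe_odd[OF n1]) (use m i in simp)
    show ?thesis using a b c by auto
  qed
  then show "0 \<le> Pf n t" "Pf n t \<le> Pf n (xk n 1)" "xk n 1 \<le> t \<Longrightarrow> Pf n (xk n 2) \<le> Pf n t" by auto
qed



lemma pi_lb: "(31415/10000) \<le> pi" by (rule order_trans[OF _ pi_approx(1)]) simp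
lemma pi_ub: "pi \<le> (31416/10000)" by (rule order_trans[OF pi_approx(2)]) simp

lemma poly_deriv5:
  "((\<lambda>t. (c*t) - (c*t)^3/18 + (c*t)^5/600) has_real_derivative c * (1 - (c*x)^2/6 + (c*x)^4/120)) (at x)"
  by (auto intro!: derivative_eq_intros simp: field_simps power2_eq_square power4_eq_xxxx
        numeral_3_eq_3 power_Suc eval_nat_numeral)

lemma poly_deriv7:
  "((\<lambda>t. (c*t) - (c*t)^3/18 + (c*t)^5/600 - (c*t)^7/35280) has_real_derivative
      c * (1 - (c*x)^2/6 + (c*x)^4/120 - (c*x)^6/5040)) (at x)"
  by (auto intro!: derivative_eq_intros simp: field_simps power2_eq_square power4_eq_xxxx
        numeral_3_eq_3 power_Suc eval_nat_numeral)

lemma xk1: "n > 0 \<Longrightarrow> xk n 1 = pi / (2 * real n)" by (simp add: xk_def)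
lemma xk2: "n > 0 \<Longrightarrow> xk n 2 = pi / real n" by (simp add: xk_def)

lemma sin_lb_d:
  assumes "0 \<le> t" "t \<le> (a::real)"
  shows "sin t \<ge> t * (1 - a^2/6)"
proof -
  have "t^2 \<le> a^2" using power_mono[OF assms(2) assms(1)] by simp
  then have "t * (1 - a^2/6) \<le> t * (1 - t^2/6)" using assms by (intro mult_left_mono) auto
  also have "\<dots> = t - t^3/6" by (simp add: algebra_simps power2_eq_square power3_eq_cube)
  also have "\<dots> \<le> sin t" using sin_ge_3 assms by simp
  finally show ?thesis .
qed

lemma P_x1_upper:
  assumes n: "n \<ge> 10"
  shows "Pf n (xk n 1) \<le> 1"
proof -
  have np: "real n \<ge> 10" using n by simp
  define c where "c = 2 * real n"
  define x1 where "x1 = pi / c"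
  define d1 where "d1 = x1^2 / 6"
  have cpos: "c > 0" unfolding c_def using np by simp
  have x1pos: "x1 > 0" unfolding x1_def using cpos by simp
  have x1le: "x1 \<le> (31416/10000) / 20"
  proof -
    have "x1 = pi / c" by (simp add: x1_def)
    also have "\<dots> \<le> (31416/10000) / c" by (rule divide_right_mono) (use pi_ub cpos in auto)
    also have "\<dots> \<le> (31416/10000) / 20" by (rule divide_left_mono) (use np in \<open>auto simp: c_def\<close>)
    finally show ?thesis .
  qed
  have d1le: "d1 \<le> (0005/1000)"
  proof -
    have "x1^2 \<le> ((31416/10000) / 20)^2" using x1le x1pos by (intro power_mono) auto
    then show ?thesis unfolding d1_def by (simp add: power2_eq_square)
  qed
  have d1ge: "d1 \<ge> 0" unfolding d1_def by simp
  define G where "G = (\<lambda>t. ((c*t) - (c*t)^3/18 + (c*t)^5/600) / (2 * (1 - d1)))"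
  let ?F = "\<lambda>t. G t - Pf n t"
  have der: "\<exists>y. (?F has_real_derivative y) (at x) \<and> y \<ge> 0" if x: "0 < x" "x < x1" for x
  proof -
    have dG: "(G has_real_derivative c * (1 - (c*x)^2/6 + (c*x)^4/120) / (2 * (1 - d1))) (at x)"
      unfolding G_def by (intro DERIV_cdivide poly_deriv5)
    have cx: "0 < c * x" "c * x < pi" using x cpos unfolding x1_def by (auto simp: field_simps)
    have sc: "sin (c*x) \<ge> 0" using cx by (intro sin_ge_zero) auto
    have scu: "sin (c*x) \<le> (c*x) * (1 - (c*x)^2/6 + (c*x)^4/120)"
      using sin_le_5[of "c*x"] cx by (simp add: algebra_simps power2_eq_square power3_eq_cube power4_eq_xxxx eval_nat_numeral)
    have sx: "sin x \<ge> x * (1 - d1)" using sin_lb_d[of x x1] x unfolding d1_def by simp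
    have xd: "x * (1 - d1) > 0" using x d1le by simp
    have sxp: "sin x > 0" using sx xd by linarith
    have "Dk n x = sin (c*x) / (2 * sin x)" using sxp by (simp add: Dk_formula c_def)
    also have "\<dots> \<le> sin (c*x) / (2 * (x * (1 - d1)))"
      using sc sx xd by (intro divide_left_mono) auto
    also have "\<dots> \<le> (c*x) * (1 - (c*x)^2/6 + (c*x)^4/120) / (2 * (x * (1 - d1)))"
      using scu xd by (intro divide_right_mono) auto
    also have "\<dots> = c * (1 - (c*x)^2/6 + (c*x)^4/120) / (2 * (1 - d1))"
    proof -
      have "1 - d1 \<noteq> 0" using d1le by simp
      then show ?thesis using x by (simp add: field_simps)
    qed
    finally have le: "Dk n x \<le> c * (1 - (c*x)^2/6 + (c*x)^4/120) / (2 * (1 - d1))" .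
    show ?thesis
      by (rule exI[of _ "c * (1 - (c*x)^2/6 + (c*x)^4/120) / (2 * (1 - d1)) - Dk n x"])
         (use le DERIV_diff[OF dG Pf_deriv] in auto)
  qed
  have cont: "continuous_on {0..x1} ?F" unfolding G_def using d1le by (intro continuous_intros Pf_cont) auto
  have "?F 0 \<le> ?F x1"
    by (rule DERIV_nonneg_imp_increasing_open[OF _ _ cont]) (use der x1pos in auto)
  then have "Pf n x1 \<le> G x1" by (simp add: G_def)
  also have "G x1 = (pi - pi^3/18 + pi^5/600) / (2 * (1 - d1))"
    unfolding G_def x1_def using cpos by simp
  also have "\<dots> \<le> 1"
  proof -
    have "pi^3 \<ge> (31415/10000)^3" using pi_lb by (intro power_mono) auto
    moreover have "((31415/10000)::real)^3 \<ge> (31003/1000)" by (simp add: power_divide)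
    ultimately have p3: "pi^3 \<ge> (31003/1000)" by linarith
    have "pi^5 \<le> (31416/10000)^5" using pi_ub by (intro power_mono) auto
    moreover have "((31416/10000)::real)^5 \<le> (30603/100)" by (simp add: power_divide)
    ultimately have p5: "pi^5 \<le> (30603/100)" by linarith
    have "pi - pi^3/18 + pi^5/600 \<le> 2 * (1 - d1)" using p3 p5 pi_ub d1le by (simp add: field_simps)
    then show ?thesis using d1le by simp
  qed
  finally show ?thesis unfolding x1_def c_def using n by (simp add: xk_def)
qed

lemma G2_deriv:
  "((\<lambda>t. - cos (c*t) * (A - B*t) / c - B * sin (c*t) / c^2) has_real_derivative sin (c*x) * (A - B*x)) (at x)"
  if "c \<noteq> 0" for c A B :: real
  using that by (auto intro!: derivative_eq_intros simp: field_simps power2_eq_square)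

lemma P_x2_lower:
  assumes n: "n \<ge> 10"
  shows "Pf n (xk n 2) \<ge> 1/3 + 1/pi"
proof -
  have np: "real n \<ge> 10" using n by simp
  define c where "c = 2 * real n"
  define x1 where "x1 = pi / c"
  define x2 where "x2 = 2 * pi / c"
  define d2 where "d2 = x2^2 / 6"
  have cpos: "c > 0" unfolding c_def using np by simp
  have x1pos: "x1 > 0" unfolding x1_def using cpos by simp
  have x12: "x1 < x2" unfolding x1_def x2_def using cpos by (simp add: divide_strict_right_mono)
  have x2le: "x2 \<le> 31416/100000"
  proof -
    have "x2 = 2 * pi / c" by (simp add: x2_def)
    also have "\<dots> \<le> 2 * (31416/10000) / c" by (rule divide_right_mono) (use pi_ub cpos in auto)
    also have "\<dots> \<le> 2 * (31416/10000) / 20" by (rule divide_left_mono) (use np in \<open>auto simp: c_def\<close>)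
    finally show ?thesis by simp
  qed
  have d2le: "d2 \<le> 165/10000"
  proof -
    have "x2^2 \<le> (31416/100000)^2" using x2le x12 x1pos by (intro power_mono) auto
    then show ?thesis unfolding d2_def by (simp add: power2_eq_square)
  qed
  define G1 where "G1 = (\<lambda>t. ((c*t) - (c*t)^3/18 + (c*t)^5/600 - (c*t)^7/35280) / 2)"
  have derA: "\<exists>y. ((\<lambda>t. Pf n t - G1 t) has_real_derivative y) (at x) \<and> y \<ge> 0" if x: "0 < x" "x < x1" for x
  proof -
    have dG: "(G1 has_real_derivative c * (1 - (c*x)^2/6 + (c*x)^4/120 - (c*x)^6/5040) / 2) (at x)"
      unfolding G1_def by (intro DERIV_cdivide poly_deriv7)
    have cx: "0 < c * x" "c * x < pi" using x cpos unfolding x1_def by (auto simp: field_simps)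
    have sc: "sin (c*x) \<ge> 0" using cx by (intro sin_ge_zero) auto
    have scl: "sin (c*x) \<ge> (c*x) * (1 - (c*x)^2/6 + (c*x)^4/120 - (c*x)^6/5040)"
      using sin_ge_7[of "c*x"] cx by (simp add: algebra_simps power2_eq_square power3_eq_cube power4_eq_xxxx eval_nat_numeral)
    have sx: "sin x \<le> x" using x by (intro sin_x_le_x) auto
    have "x < pi" using x x12 x2le pi_lb by linarith
    then have sxp: "sin x > 0" using x by (intro sin_gt_zero) auto
    have "c * (1 - (c*x)^2/6 + (c*x)^4/120 - (c*x)^6/5040) / 2 = (c*x) * (1 - (c*x)^2/6 + (c*x)^4/120 - (c*x)^6/5040) / (2 * x)"
      using x by (simp add: field_simps)
    also have "\<dots> \<le> sin (c*x) / (2 * x)" using scl x by (intro divide_right_mono) auto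
    also have "\<dots> \<le> sin (c*x) / (2 * sin x)" using sc sx sxp by (intro divide_left_mono) auto
    also have "\<dots> = Dk n x" using sxp by (simp add: Dk_formula c_def)
    finally have le: "c * (1 - (c*x)^2/6 + (c*x)^4/120 - (c*x)^6/5040) / 2 \<le> Dk n x" .
    show ?thesis
      by (rule exI[of _ "Dk n x - c * (1 - (c*x)^2/6 + (c*x)^4/120 - (c*x)^6/5040) / 2"])
         (use le DERIV_diff[OF Pf_deriv dG] in auto)
  qed
  have contA: "continuous_on {0..x1} (\<lambda>t. Pf n t - G1 t)" unfolding G1_def by (intro continuous_intros Pf_cont) auto
  have "(\<lambda>t. Pf n t - G1 t) 0 \<le> (\<lambda>t. Pf n t - G1 t) x1"
    by (rule DERIV_nonneg_imp_increasing_open[OF _ _ contA]) (use derA x1pos in auto)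
  then have PA: "Pf n x1 \<ge> G1 x1" by (simp add: G1_def)
  have G1v: "G1 x1 = (pi - pi^3/18 + pi^5/600 - pi^7/35280) / 2"
    unfolding G1_def x1_def using cpos by simp
  define k where "k = 1 / (2 * (1 - d2))"
  define A where "A = k * (1/x1 + 1/x2)"
  define B where "B = k / (x1 * x2)"
  define G2 where "G2 = (\<lambda>t. - cos (c*t) * (A - B*t) / c - B * sin (c*t) / c^2)"
  have kpos: "k > 0" unfolding k_def using d2le by simp
  have derB: "\<exists>y. ((\<lambda>t. Pf n t - G2 t) has_real_derivative y) (at x) \<and> y \<ge> 0" if x: "x1 < x" "x < x2" for x
  proof -
    have dG: "(G2 has_real_derivative sin (c*x) * (A - B*x)) (at x)"
      unfolding G2_def using cpos by (intro G2_deriv) auto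
    have cx: "pi < c * x" "c * x < 2 * pi" using x cpos unfolding x1_def x2_def by (auto simp: field_simps)
    have sc: "sin (c*x) \<le> 0" using cx by (intro sin_le_zero) auto
    have x0: "x > 0" using x x1pos by simp
    have sx: "sin x \<ge> x * (1 - d2)" using sin_lb_d[of x x2] x x0 unfolding d2_def by simp
    have xd: "x * (1 - d2) > 0" using x0 d2le by simp
    have sxp: "sin x > 0" using sx xd by linarith
    have "1 / (2 * sin x) \<le> 1 / (2 * (x * (1 - d2)))" using sx xd by (intro divide_left_mono) auto
    also have "\<dots> = k / x" unfolding k_def by simp
    also have "\<dots> \<le> A - B * x"
    proof -
      have "(x - x1) * (x - x2) \<le> 0" using x by (simp add: mult_nonneg_nonpos)
      then have "x1 * x2 \<le> x * (x1 + x2) - x^2" by (simp add: algebra_simps power2_eq_square)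
      moreover have "1/x1 + 1/x2 - x/(x1*x2) - 1/x = (x*(x1+x2) - x^2 - x1*x2)/(x*x1*x2)"
        using x0 x1pos x12 by (simp add: field_simps power2_eq_square)
      moreover have "x*x1*x2 > 0" using x0 x1pos x12 by simp
      ultimately have "1/x1 + 1/x2 - x/(x1*x2) - 1/x \<ge> 0" by simp
      then have "1 / x \<le> 1/x1 + 1/x2 - x/(x1*x2)" by simp
      then have "k * (1 / x) \<le> k * (1/x1 + 1/x2 - x/(x1*x2))" using kpos by (intro mult_left_mono) auto
      then show ?thesis unfolding A_def B_def by (simp add: algebra_simps)
    qed
    finally have hle: "1 / (2 * sin x) \<le> A - B * x" .
    have "sin (c*x) * (A - B*x) \<le> sin (c*x) * (1 / (2 * sin x))"
      using hle sc by (intro mult_left_mono_neg) auto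
    also have "\<dots> = Dk n x" using sxp by (simp add: Dk_formula c_def)
    finally have le: "sin (c*x) * (A - B*x) \<le> Dk n x" .
    show ?thesis
      by (rule exI[of _ "Dk n x - sin (c*x) * (A - B*x)"])
         (use le DERIV_diff[OF Pf_deriv dG] in auto)
  qed
  have contB: "continuous_on {x1..x2} (\<lambda>t. Pf n t - G2 t)" unfolding G2_def using cpos
    by (intro continuous_intros Pf_cont) auto
  have "(\<lambda>t. Pf n t - G2 t) x1 \<le> (\<lambda>t. Pf n t - G2 t) x2"
    by (rule DERIV_nonneg_imp_increasing_open[OF _ _ contB]) (use derB x12 in auto)
  then have PB: "Pf n x2 \<ge> Pf n x1 + (G2 x2 - G2 x1)" by simp
  have G2v: "G2 x2 - G2 x1 = - 3 / (4 * pi * (1 - d2))"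
  proof -
    have c1: "c * x1 = pi" "c * x2 = 2 * pi" unfolding x1_def x2_def using cpos by auto
    have "G2 x2 - G2 x1 = - (A - B * x2) / c - (A - B * x1) / c"
      unfolding G2_def using c1 by simp
    also have "\<dots> = - (2 * A - B * (x1 + x2)) / c" using cpos by (simp add: field_simps)
    also have "2 * A - B * (x1 + x2) = k * (1/x1 + 1/x2)"
      unfolding A_def B_def using x1pos x12 by (simp add: field_simps)
    also have "1/x1 + 1/x2 = 3 * c / (2 * pi)" unfolding x1_def x2_def using cpos by (simp add: field_simps)
    also have "- (k * (3 * c / (2 * pi))) / c = - 3 / (4 * pi * (1 - d2))"
      unfolding k_def using cpos d2le by (simp add: field_simps)
    finally show ?thesis .
  qed
  have p3: "pi^3 \<le> 31006495/1000000"
  proof -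
    have "pi^3 \<le> (31416/10000)^3" using pi_ub by (intro power_mono) auto
    also have "((31416/10000)::real)^3 \<le> 31006495/1000000" by (simp add: power_divide)
    finally show ?thesis .
  qed
  have p5: "pi^5 \<ge> 30597456/100000"
  proof -
    have "pi^5 \<ge> (31415/10000)^5" using pi_lb by (intro power_mono) auto
    moreover have "((31415/10000)::real)^5 \<ge> 30597456/100000" by (simp add: power_divide)
    ultimately show ?thesis by linarith
  qed
  have p7: "pi^7 \<le> 30203427/10000"
  proof -
    have "pi^7 \<le> (31416/10000)^7" using pi_ub by (intro power_mono) auto
    also have "((31416/10000)::real)^7 \<le> 30203427/10000" by (simp add: power_divide)
    finally show ?thesis .
  qed
  have poly: "(pi - pi^3/18 + pi^5/600 - pi^7/35280) / 2 \<ge> 9216/10000"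
    using pi_lb p3 p5 p7 by (simp add: field_simps)
  have ip: "1/pi \<le> 3184/10000"
  proof -
    have "1/pi \<le> 1/(31415/10000)" using pi_lb by (intro divide_left_mono) auto
    then show ?thesis by simp
  qed
  have t3: "3 / (4 * pi * (1 - d2)) \<le> 2428/10000"
  proof -
    have Y: "(31415/10000) * (1 - 165/10000) \<le> pi * (1 - d2)"
      using pi_lb d2le by (intro mult_mono) auto
    have "3 / (4 * pi * (1 - d2)) = 3 / (4 * (pi * (1 - d2)))" by simp
    also have "\<dots> \<le> 3 / (4 * ((31415/10000) * (1 - 165/10000)))"
      using Y by (intro divide_left_mono mult_left_mono) auto
    also have "\<dots> \<le> 2428/10000" by simp
    finally show ?thesis .
  qed
  have q1: "Pf n x1 \<ge> 9216/10000" using PA G1v poly by linarith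
  have q2: "Pf n x2 \<ge> Pf n x1 + - 3 / (4 * pi * (1 - d2))" using PB G2v by simp
  have q3: "- 3 / (4 * pi * (1 - d2)) = - (3 / (4 * pi * (1 - d2)))" by simp
  have "Pf n x2 \<ge> 1/3 + 1/pi"
    using q1 q2 q3 ip t3 by linarith
  moreover have "xk n 2 = x2" unfolding xk_def x2_def c_def by simp
  ultimately show ?thesis by simp
qed



lemma abs_diff_by_deriv:
  fixes f g f' g' :: "real \<Rightarrow> real"
  assumes xy: "x \<le> y"
    and d: "\<And>t. x \<le> t \<Longrightarrow> t \<le> y \<Longrightarrow> (f has_real_derivative f' t) (at t) \<and> (g has_real_derivative g' t) (at t) \<and> \<bar>f' t\<bar> \<le> g' t"
  shows "\<bar>f y - f x\<bar> \<le> g y - g x"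
proof -
  have "(\<lambda>t. g t - f t) x \<le> (\<lambda>t. g t - f t) y"
  proof (rule DERIV_nonneg_imp_nondecreasing[OF xy])
    fix t assume "x \<le> t" "t \<le> y"
    with d[of t] show "\<exists>z. ((\<lambda>t. g t - f t) has_real_derivative z) (at t) \<and> 0 \<le> z"
      by (intro exI[of _ "g' t - f' t"]) (auto intro!: DERIV_diff)
  qed
  moreover have "(\<lambda>t. g t + f t) x \<le> (\<lambda>t. g t + f t) y"
  proof (rule DERIV_nonneg_imp_nondecreasing[OF xy])
    fix t assume "x \<le> t" "t \<le> y"
    with d[of t] show "\<exists>z. ((\<lambda>t. g t + f t) has_real_derivative z) (at t) \<and> 0 \<le> z"
      by (intro exI[of _ "g' t + f' t"]) (auto intro!: DERIV_add)
  qed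
  ultimately show ?thesis by simp
qed

definition Wf :: "real \<Rightarrow> real" where "Wf t = - cos t / (2 * sin t)"
definition hf :: "real \<Rightarrow> real" where "hf t = 1 / (2 * sin t)"

lemma Wf_deriv:
  assumes st: "sin t \<noteq> 0"
  shows "(Wf has_real_derivative 1 / (2 * (sin t)^2)) (at t)"
proof -
  have "(Wf has_real_derivative ((sin t * (2 * sin t) - (- cos t) * (2 * cos t)) / (2 * sin t * (2 * sin t)))) (at t)"
    unfolding Wf_def using st by (auto intro!: derivative_eq_intros simp: field_simps)
  moreover have "(sin t * (2 * sin t) - (- cos t) * (2 * cos t)) / (2 * sin t * (2 * sin t)) = 1 / (2 * (sin t)^2)"
  proof -
    have "sin t * (2 * sin t) - (- cos t) * (2 * cos t) = 2 * ((sin t)^2 + (cos t)^2)" by algebra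
    also have "\<dots> = 2" by simp
    finally have e: "sin t * (2 * sin t) - (- cos t) * (2 * cos t) = 2" .
    show ?thesis unfolding e using st by (simp add: power2_eq_square field_simps)
  qed
  ultimately show ?thesis by simp
qed

lemma hf_deriv: "sin t \<noteq> 0 \<Longrightarrow> (hf has_real_derivative - cos t / (2 * (sin t)^2)) (at t)"
  unfolding hf_def
  by (auto intro!: derivative_eq_intros simp: field_simps power2_eq_square)

lemma far_single:
  assumes n: "n \<ge> 1" and xy: "x \<le> y" and x0: "0 < x" and y0: "y < pi"
    and m: "y - x = of_int m * pi / real n"
  shows "\<bar>Pf n y - Pf n x\<bar> \<le> (Wf y - Wf x) / real n"
proof -
  have np: "real n > 0" using n by simp
  have sinpos: "sin t > 0" if "x \<le> t" "t \<le> y" for t using that x0 y0 by (intro sin_gt_zero) auto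
  define Psi where "Psi = (\<lambda>t. Pf n t + cos (2 * real n * t) * hf t / (2 * real n))"
  have dPsi: "(Psi has_real_derivative cos (2 * real n * t) * (- cos t / (2 * (sin t)^2)) / (2 * real n)) (at t)"
    if "x \<le> t" "t \<le> y" for t
  proof -
    have st: "sin t \<noteq> 0" using sinpos[OF that] by simp
    have dc: "((\<lambda>t. cos (2 * real n * t)) has_real_derivative - sin (2 * real n * t) * (2 * real n)) (at t)"
      by (auto intro!: derivative_eq_intros)
    have "(Psi has_real_derivative Dk n t + (- sin (2 * real n * t) * (2 * real n) * hf t + cos (2 * real n * t) * (- cos t / (2 * (sin t)^2))) / (2 * real n)) (at t)"
      unfolding Psi_def
      by (intro DERIV_add Pf_deriv DERIV_cdivide DERIV_cong[OF DERIV_mult'[OF dc hf_deriv[OF st]]]) (simp add: algebra_simps)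
    moreover have "Dk n t + (- sin (2 * real n * t) * (2 * real n) * hf t + cos (2 * real n * t) * (- cos t / (2 * (sin t)^2))) / (2 * real n)
        = cos (2 * real n * t) * (- cos t / (2 * (sin t)^2)) / (2 * real n)"
      using st np by (simp add: Dk_formula hf_def field_simps)
    ultimately show ?thesis by simp
  qed
  have b1: "\<bar>cos (2 * real n * t) * (- cos t / (2 * (sin t)^2)) / (2 * real n)\<bar> \<le> (1 / (2 * (sin t)^2)) / (2 * real n)" for t
  proof -
    have "\<bar>cos (2 * real n * t) * (- cos t / (2 * (sin t)^2)) / (2 * real n)\<bar> = \<bar>cos (2 * real n * t)\<bar> * \<bar>cos t\<bar> / (2 * (sin t)^2) / (2 * real n)"
      using np by (simp add: abs_mult)
    also have "\<dots> \<le> 1 * 1 / (2 * (sin t)^2) / (2 * real n)"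
      using np by (intro divide_right_mono mult_mono) auto
    finally show ?thesis by simp
  qed
  have A: "\<bar>Psi y - Psi x\<bar> \<le> (\<lambda>t. Wf t / (2 * real n)) y - (\<lambda>t. Wf t / (2 * real n)) x"
  proof (rule abs_diff_by_deriv[OF xy])
    fix t assume t: "x \<le> t" "t \<le> y"
    have st: "sin t \<noteq> 0" using sinpos[OF t] by simp
    show "(Psi has_real_derivative cos (2 * real n * t) * (- cos t / (2 * (sin t)^2)) / (2 * real n)) (at t) \<and>
      ((\<lambda>t. Wf t / (2 * real n)) has_real_derivative (1 / (2 * (sin t)^2)) / (2 * real n)) (at t) \<and>
      \<bar>cos (2 * real n * t) * (- cos t / (2 * (sin t)^2)) / (2 * real n)\<bar> \<le> (1 / (2 * (sin t)^2)) / (2 * real n)"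
      using dPsi[OF t] DERIV_cdivide[OF Wf_deriv[OF st]] b1 by blast
  qed
  have B: "\<bar>hf y - hf x\<bar> \<le> Wf y - Wf x"
  proof (rule abs_diff_by_deriv[OF xy])
    fix t assume t: "x \<le> t" "t \<le> y"
    have st: "sin t \<noteq> 0" using sinpos[OF t] by simp
    have "\<bar>- cos t / (2 * (sin t)^2)\<bar> = \<bar>cos t\<bar> / (2 * (sin t)^2)" by (simp add: abs_mult)
    also have "\<dots> \<le> 1 / (2 * (sin t)^2)" by (intro divide_right_mono) auto
    finally show "(hf has_real_derivative - cos t / (2 * (sin t)^2)) (at t) \<and>
      (Wf has_real_derivative 1 / (2 * (sin t)^2)) (at t) \<and> \<bar>- cos t / (2 * (sin t)^2)\<bar> \<le> 1 / (2 * (sin t)^2)"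
      using hf_deriv[OF st] Wf_deriv[OF st] by blast
  qed
  have cy: "cos (2 * real n * y) = cos (2 * real n * x)"
  proof -
    have "2 * real n * y = 2 * real n * x + 2 * pi * of_int m" using m np by (simp add: field_simps)
    then show ?thesis by (simp add: cos_add_2pi_int)
  qed
  have "Pf n y - Pf n x = (Psi y - Psi x) - cos (2 * real n * x) * (hf y - hf x) / (2 * real n)"
    unfolding Psi_def cy using np by (simp add: field_simps)
  then have "\<bar>Pf n y - Pf n x\<bar> \<le> \<bar>Psi y - Psi x\<bar> + \<bar>cos (2 * real n * x)\<bar> * \<bar>hf y - hf x\<bar> / (2 * real n)"
  proof -
    assume eq: "Pf n y - Pf n x = (Psi y - Psi x) - cos (2 * real n * x) * (hf y - hf x) / (2 * real n)"
    have "\<bar>cos (2 * real n * x) * (hf y - hf x) / (2 * real n)\<bar> = \<bar>cos (2 * real n * x)\<bar> * \<bar>hf y - hf x\<bar> / (2 * real n)"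
      using np by (simp add: abs_mult)
    then show ?thesis unfolding eq using abs_triangle_ineq4[of "Psi y - Psi x" "cos (2 * real n * x) * (hf y - hf x) / (2 * real n)"]
      by linarith
  qed
  also have "\<dots> \<le> (Wf y - Wf x) / (2 * real n) + 1 * (Wf y - Wf x) / (2 * real n)"
  proof -
    have "\<bar>cos (2 * real n * x)\<bar> * \<bar>hf y - hf x\<bar> \<le> 1 * (Wf y - Wf x)"
      using B by (intro mult_mono) auto
    then have "\<bar>cos (2 * real n * x)\<bar> * \<bar>hf y - hf x\<bar> / (2 * real n) \<le> 1 * (Wf y - Wf x) / (2 * real n)"
      using np by (intro divide_right_mono) auto
    moreover have "\<bar>Psi y - Psi x\<bar> \<le> (Wf y - Wf x) / (2 * real n)" using A by (simp add: diff_divide_distrib)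
    ultimately show ?thesis by linarith
  qed
  also have "\<dots> = (Wf y - Wf x) / real n" by (simp add: field_simps)
  finally show ?thesis .
qed

lemma disj_sum:
  fixes X Y :: "'a \<Rightarrow> real" and W :: "real \<Rightarrow> real"
  assumes "finite S" "\<forall>J\<in>S. A \<le> X J \<and> X J \<le> Y J \<and> Y J \<le> B"
    "\<forall>J\<in>S. \<forall>J'\<in>S. J \<noteq> J' \<longrightarrow> Y J < X J' \<or> Y J' < X J"
    "\<forall>u v. A \<le> u \<longrightarrow> u \<le> v \<longrightarrow> v \<le> B \<longrightarrow> W u \<le> W v" "A \<le> B"
  shows "(\<Sum>J\<in>S. W (Y J) - W (X J)) \<le> W B - W A"
  using assms
proof (induction "card S" arbitrary: S B rule: less_induct)
  case less
  show ?case
  proof (cases "S = {}")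
    case True
    then show ?thesis using less.prems by simp
  next
    case False
    have fx: "finite (X ` S)" "X ` S \<noteq> {}" using False less.prems(1) by auto
    obtain J0 where J0S: "J0 \<in> S" and J0M: "X J0 = Max (X ` S)"
      using Max_in[OF fx] by auto
    have J0: "J0 \<in> S" "\<forall>J\<in>S. X J \<le> X J0"
      using J0S J0M Max_ge[OF fx(1)] by auto
    let ?S = "S - {J0}"
    have sub: "\<forall>J\<in>?S. A \<le> X J \<and> X J \<le> Y J \<and> Y J \<le> X J0"
    proof
      fix J assume J: "J \<in> ?S"
      then have "Y J < X J0 \<or> Y J0 < X J" using less.prems(3) J0 by blast
      moreover have "X J \<le> X J0" "X J0 \<le> Y J0" using J0 J less.prems(2) by auto
      ultimately show "A \<le> X J \<and> X J \<le> Y J \<and> Y J \<le> X J0" using J less.prems(2) by force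
    qed
    have c: "card ?S < card S" using card_Diff1_less[OF less.prems(1) J0(1)] .
    have ih: "(\<Sum>J\<in>?S. W (Y J) - W (X J)) \<le> W (X J0) - W A"
    proof (rule less.hyps[OF c])
      show "finite ?S" using less.prems(1) by simp
      show "\<forall>J\<in>?S. A \<le> X J \<and> X J \<le> Y J \<and> Y J \<le> X J0" by (rule sub)
      show "\<forall>J\<in>?S. \<forall>J'\<in>?S. J \<noteq> J' \<longrightarrow> Y J < X J' \<or> Y J' < X J" using less.prems(3) by blast
      show "\<forall>u v. A \<le> u \<longrightarrow> u \<le> v \<longrightarrow> v \<le> X J0 \<longrightarrow> W u \<le> W v"
        using less.prems(4) less.prems(2) J0 by (meson order_trans)
      show "A \<le> X J0" using less.prems(2) J0 by auto
    qed
    have "(\<Sum>J\<in>S. W (Y J) - W (X J)) = (W (Y J0) - W (X J0)) + (\<Sum>J\<in>?S. W (Y J) - W (X J))"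
      using J0 less.prems(1) by (simp add: sum.remove)
    also have "\<dots> \<le> (W (Y J0) - W (X J0)) + (W (X J0) - W A)" using ih by simp
    also have "\<dots> \<le> W B - W A"
    proof -
      have "A \<le> Y J0" "Y J0 \<le> B" using less.prems(2) J0 by auto
      then have "W (Y J0) \<le> W B" using less.prems(4) by blast
      then show ?thesis by simp
    qed
    finally show ?thesis .
  qed
qed

lemma cot_le:
  assumes "0 < a" "a \<le> pi"
  shows "a * cos a \<le> sin a"
proof -
  have "(\<lambda>t. sin t - t * cos t) 0 \<le> (\<lambda>t. sin t - t * cos t) a"
  proof (rule DERIV_nonneg_imp_nondecreasing[of 0 a "\<lambda>t. sin t - t * cos t"])
    show "0 \<le> a" using assms by simp
    fix t assume t: "0 \<le> t" "t \<le> a"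
    have "sin t \<ge> 0" using t assms by (intro sin_ge_zero) auto
    then show "\<exists>y. ((\<lambda>t. sin t - t * cos t) has_real_derivative y) (at t) \<and> 0 \<le> y"
      using t by (intro exI[of _ "t * sin t"]) (auto intro!: derivative_eq_intros)
  qed
  then show ?thesis by simp
qed

lemma far_family:
  fixes X Y :: "'a \<Rightarrow> real"
  assumes n: "n \<ge> 2" and fin: "finite S"
    and iv: "\<forall>J\<in>S. pi / real n \<le> X J \<and> X J \<le> Y J \<and> Y J \<le> pi - pi / real n \<and> (\<exists>m::int. Y J - X J = of_int m * pi / real n)"
    and dj: "\<forall>J\<in>S. \<forall>J'\<in>S. J \<noteq> J' \<longrightarrow> Y J < X J' \<or> Y J' < X J"
  shows "(\<Sum>J\<in>S. \<bar>Pf n (Y J) - Pf n (X J)\<bar>) \<le> 1 / pi"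
proof -
  have np: "real n \<ge> 2" using n by simp
  define a where "a = pi / real n"
  have a0: "0 < a" unfolding a_def using np by simp
  have a2: "a \<le> pi / 2" unfolding a_def using np by (intro divide_left_mono) auto
  have ab: "a \<le> pi - a" using a2 by simp
  have "(\<Sum>J\<in>S. \<bar>Pf n (Y J) - Pf n (X J)\<bar>) \<le> (\<Sum>J\<in>S. (Wf (Y J) - Wf (X J)) / real n)"
  proof (rule sum_mono)
    fix J assume J: "J \<in> S"
    then obtain m :: int where m: "Y J - X J = of_int m * pi / real n" using iv by blast
    have XJ: "a \<le> X J" "X J \<le> Y J" "Y J \<le> pi - a" using iv J unfolding a_def by auto
    show "\<bar>Pf n (Y J) - Pf n (X J)\<bar> \<le> (Wf (Y J) - Wf (X J)) / real n"
      by (rule far_single[OF _ _ _ _ m]) (use XJ a0 n in auto)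
  qed
  also have "\<dots> = (\<Sum>J\<in>S. Wf (Y J) - Wf (X J)) / real n" by (simp add: sum_divide_distrib)
  also have "\<dots> \<le> (Wf (pi - a) - Wf a) / real n"
  proof (rule divide_right_mono)
    show "(\<Sum>J\<in>S. Wf (Y J) - Wf (X J)) \<le> Wf (pi - a) - Wf a"
    proof (rule disj_sum[OF fin, where A=a and B="pi - a" and W=Wf and X=X and Y=Y])
      show "\<forall>J\<in>S. a \<le> X J \<and> X J \<le> Y J \<and> Y J \<le> pi - a" using iv unfolding a_def by blast
      show "\<forall>J\<in>S. \<forall>J'\<in>S. J \<noteq> J' \<longrightarrow> Y J < X J' \<or> Y J' < X J" by (rule dj)
      show "a \<le> pi - a" by (rule ab)
      show "\<forall>u v. a \<le> u \<longrightarrow> u \<le> v \<longrightarrow> v \<le> pi - a \<longrightarrow> Wf u \<le> Wf v"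
      proof (intro allI impI)
        fix u v assume uv: "a \<le> u" "u \<le> v" "v \<le> pi - a"
        show "Wf u \<le> Wf v"
        proof (rule DERIV_nonneg_imp_nondecreasing[OF uv(2)])
          fix t assume t: "u \<le> t" "t \<le> v"
          have "sin t > 0" using t uv a0 by (intro sin_gt_zero) auto
          then show "\<exists>y. (Wf has_real_derivative y) (at t) \<and> 0 \<le> y"
            by (intro exI[of _ "1 / (2 * (sin t)^2)"]) (auto intro: Wf_deriv)
        qed
      qed
    qed
  qed (use np in simp)
  also have "Wf (pi - a) - Wf a = cos a / sin a"
    unfolding Wf_def by (simp add: sin_diff cos_diff field_simps)
  also have "cos a / sin a \<le> 1 / a"
  proof -
    have sa: "sin a > 0" using a0 a2 by (intro sin_gt_zero) auto
    have "a * cos a \<le> sin a" using cot_le a0 a2 by simp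
    then show ?thesis using sa a0 by (simp add: field_simps)
  qed
  finally have "(\<Sum>J\<in>S. \<bar>Pf n (Y J) - Pf n (X J)\<bar>) \<le> (1 / a) / real n" using np by (simp add: divide_right_mono)
  also have "(1 / a) / real n = 1 / pi" unfolding a_def using np by simp
  finally show ?thesis .
qed



lemma arc_iff: "x \<in> arc a b \<longleftrightarrow> (\<exists>k::int. a \<le> x + 2 * pi * of_int k \<and> x + 2 * pi * of_int k \<le> b)"
  by (simp add: arc_def)

lemma arc_per: "x \<in> arc a b \<Longrightarrow> x + 2 * pi * of_int m \<in> arc a b"
proof -
  assume "x \<in> arc a b"
  then obtain k :: int where k: "a \<le> x + 2 * pi * of_int k" "x + 2 * pi * of_int k \<le> b" by (auto simp: arc_iff)
  have e: "x + 2 * pi * of_int m + 2 * pi * of_int (k - m) = x + 2 * pi * of_int k" by (simp add: algebra_simps)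
  show ?thesis unfolding arc_iff by (rule exI[of _ "k - m"]) (use k e in simp)
qed

lemma arc_base: "a \<le> x \<Longrightarrow> x \<le> b \<Longrightarrow> x \<in> arc a b"
  unfolding arc_iff by (rule exI[of _ 0]) simp

lemma arc_shift: "arc (a + 2 * pi * of_int k) (b + 2 * pi * of_int k) = arc a b"
proof -
  have "(\<exists>j::int. a + 2 * pi * of_int k \<le> x + 2 * pi * of_int j \<and> x + 2 * pi * of_int j \<le> b + 2 * pi * of_int k) \<longleftrightarrow>
        (\<exists>j::int. a \<le> x + 2 * pi * of_int j \<and> x + 2 * pi * of_int j \<le> b)" for x
  proof
    assume "\<exists>j::int. a + 2 * pi * of_int k \<le> x + 2 * pi * of_int j \<and> x + 2 * pi * of_int j \<le> b + 2 * pi * of_int k"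
    then obtain j :: int where "a + 2 * pi * of_int k \<le> x + 2 * pi * of_int j" "x + 2 * pi * of_int j \<le> b + 2 * pi * of_int k" by blast
    then show "\<exists>j::int. a \<le> x + 2 * pi * of_int j \<and> x + 2 * pi * of_int j \<le> b"
      by (intro exI[of _ "j - k"]) (simp add: algebra_simps)
  next
    assume "\<exists>j::int. a \<le> x + 2 * pi * of_int j \<and> x + 2 * pi * of_int j \<le> b"
    then obtain j :: int where "a \<le> x + 2 * pi * of_int j" "x + 2 * pi * of_int j \<le> b" by blast
    then show "\<exists>j::int. a + 2 * pi * of_int k \<le> x + 2 * pi * of_int j \<and> x + 2 * pi * of_int j \<le> b + 2 * pi * of_int k"
      by (intro exI[of _ "j + k"]) (simp add: algebra_simps)
  qed
  then show ?thesis unfolding arc_def by blast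
qed

lemma int_cases3: "(k::int) \<ge> 1 \<or> k \<le> -1 \<or> k = 0" by linarith

lemma arc_window:
  assumes ab: "a < b" "b < a + 2 * pi" and x: "a \<le> x" "x < a + 2 * pi"
  shows "x \<in> arc a b \<longleftrightarrow> x \<le> b"
proof
  assume "x \<le> b" then show "x \<in> arc a b" using x by (intro arc_base) auto
next
  assume "x \<in> arc a b"
  then obtain k :: int where k: "a \<le> x + 2 * pi * of_int k" "x + 2 * pi * of_int k \<le> b" by (auto simp: arc_iff)
  consider "k \<ge> 1" | "k \<le> -1" | "k = 0" using int_cases3 by blast
  then show "x \<le> b"
  proof cases
    case 1
    then have "2 * pi * of_int k \<ge> 2 * pi * 1" by (intro mult_left_mono) auto
    then show ?thesis using k ab x by linarith
  next
    case 2
    then have "2 * pi * of_int k \<le> 2 * pi * (-1)" by (intro mult_left_mono) auto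
    then show ?thesis using k ab x by linarith
  next
    case 3 then show ?thesis using k by simp
  qed
qed

lemma arc_unique:
  assumes ab: "a < b" "b - a < 2 * pi" and ab': "a' < b'" "b' - a' < 2 * pi"
    and eq: "arc a b = arc a' b'"
  shows "\<exists>k::int. a' = a + 2 * pi * of_int k \<and> b' = b + 2 * pi * of_int k"
proof -
  define k where "k = \<lfloor>(a' - a) / (2 * pi)\<rfloor>"
  have k1: "2 * pi * of_int k \<le> a' - a"
  proof -
    have "of_int k \<le> (a' - a) / (2 * pi)" unfolding k_def by linarith
    then show ?thesis by (simp add: field_simps)
  qed
  have k2: "a' - a < 2 * pi * of_int k + 2 * pi"
  proof -
    have "(a' - a) / (2 * pi) < of_int k + 1" unfolding k_def by linarith
    then show ?thesis by (simp add: field_simps)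
  qed
  define a2 where "a2 = a' + 2 * pi * of_int (-k)"
  define b2 where "b2 = b' + 2 * pi * of_int (-k)"
  have eq2: "arc a b = arc a2 b2" unfolding a2_def b2_def arc_shift eq ..
  have a2w: "a \<le> a2" "a2 < a + 2 * pi" using k1 k2 unfolding a2_def by auto
  have ab2: "a2 < b2" "b2 < a2 + 2 * pi" using ab' unfolding a2_def b2_def by auto
  have a2b: "a2 \<le> b"
  proof -
    have "a2 \<in> arc a2 b2" using ab2 by (intro arc_base) auto
    then have "a2 \<in> arc a b" using eq2 by simp
    then show ?thesis using arc_window[of a b a2] ab a2w by simp
  qed
  have aa: "a2 = a"
  proof (rule ccontr)
    assume ne: "a2 \<noteq> a"
    then have lt: "a < a2" using a2w by simp
    have "a + 2 * pi \<in> arc a b"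
      using arc_per[OF arc_base[of a a b], of 1] ab by simp
    then have "a + 2 * pi \<in> arc a2 b2" using eq2 by simp
    then have "a + 2 * pi \<le> b2" using arc_window[of a2 b2 "a + 2 * pi"] ab2 lt a2w by simp
    define w where "w = (b + a + 2 * pi) / 2"
    have w1: "b < w" "w < a + 2 * pi" unfolding w_def using ab by auto
    have "w \<in> arc a2 b2" using arc_window[of a2 b2 w] ab2 w1 a2b lt \<open>a + 2 * pi \<le> b2\<close> by simp
    then have "w \<in> arc a b" using eq2 by simp
    then have "w \<le> b" using arc_window[of a b w] ab w1 by simp
    then show False using w1 by simp
  qed
  have bb: "b2 = b"
  proof -
    have "b \<in> arc a b" using ab by (intro arc_base) auto
    then have "b \<in> arc a b2" using eq2 aa by simp
    then have 1: "b \<le> b2" using arc_window[of a b2 b] ab2 aa ab by simp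
    have "b2 \<in> arc a b2" using ab2 aa by (intro arc_base) auto
    then have "b2 \<in> arc a b" using eq2 aa by simp
    then have 2: "b2 \<le> b" using arc_window[of a b b2] ab2 aa ab by simp
    from 1 2 show ?thesis by simp
  qed
  show ?thesis
    by (rule exI[of _ k]) (use aa bb in \<open>simp add: a2_def b2_def algebra_simps\<close>)
qed



definition rep :: "real set \<Rightarrow> real \<times> real" where
  "rep J = (SOME p. fst p < snd p \<and> snd p - fst p < 2 * pi \<and> J = arc (fst p) (snd p))"
definition ea :: "real set \<Rightarrow> real" where "ea J = fst (rep J)"
definition eb :: "real set \<Rightarrow> real" where "eb J = snd (rep J)"

lemma rep_spec:
  assumes "a < b" "b - a < 2 * pi" "J = arc a b"
  shows "ea J < eb J \<and> eb J - ea J < 2 * pi \<and> J = arc (ea J) (eb J)"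
proof -
  have "\<exists>p. fst p < snd p \<and> snd p - fst p < 2 * pi \<and> J = arc (fst p) (snd p)"
    using assms by (intro exI[of _ "(a, b)"]) auto
  then show ?thesis unfolding ea_def eb_def rep_def by (rule someI_ex)
qed

lemma rep_of:
  assumes "a < b" "b - a < 2 * pi" "J = arc a b"
  shows "\<exists>k::int. ea J = a + 2 * pi * of_int k \<and> eb J = b + 2 * pi * of_int k"
  using rep_spec[OF assms] assms by (intro arc_unique) auto

definition cJ :: "nat \<Rightarrow> real set \<Rightarrow> real \<Rightarrow> real" where
  "cJ n J \<phi> = Pf n (eb J - \<phi>) - Pf n (ea J - \<phi>)"

lemma Pf_per': "Pf n (x + 2 * pi * of_int k - y) = Pf n (x - y)"
proof -
  have "x + 2 * pi * of_int k - y = (x - y) + 2 * pi * of_int k" by simp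
  then show ?thesis by (simp only: Pf_per)
qed

lemma cJ_rep:
  assumes "a < b" "b - a < 2 * pi" "J = arc a b"
  shows "cJ n J \<phi> = Pf n (b - \<phi>) - Pf n (a - \<phi>)"
proof -
  obtain k :: int where k: "ea J = a + 2 * pi * of_int k" "eb J = b + 2 * pi * of_int k"
    using rep_of[OF assms] by blast
  show ?thesis unfolding cJ_def k Pf_per' ..
qed

lemma Pf_mpi: "Pf n (x - pi) = - Pf n x"
  using Pf_pi[of n "x - pi"] by simp

lemma cJ_pi: "cJ n J (\<phi> + pi) = - cJ n J \<phi>"
proof -
  have "Pf n (eb J - (\<phi> + pi)) = - Pf n (eb J - \<phi>)" "Pf n (ea J - (\<phi> + pi)) = - Pf n (ea J - \<phi>)"
    using Pf_mpi[of n "eb J - \<phi>"] Pf_mpi[of n "ea J - \<phi>"] by (simp_all add: algebra_simps)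
  then show ?thesis unfolding cJ_def by simp
qed

definition Tf :: "nat \<Rightarrow> real set set \<Rightarrow> (real set \<Rightarrow> real) \<Rightarrow> real \<Rightarrow> real" where
  "Tf n \<I> \<alpha> \<phi> = (\<Sum>J\<in>\<I>. \<alpha> J * cJ n J \<phi>)"

definition good :: "nat \<Rightarrow> real set set \<Rightarrow> bool" where
  "good n \<I> \<longleftrightarrow> n \<ge> 14 \<and> finite \<I> \<and>
     (\<forall>J\<in>\<I>. \<exists>a b. a < b \<and> b - a \<le> 6 * pi / real n \<and> J = arc a b \<and> (\<exists>m::int. b - a = of_int m * pi / real n)) \<and>
     (\<forall>J\<in>\<I>. (\<lambda>\<theta>. pi + \<theta>) ` J \<in> \<I>) \<and>
     (\<forall>I\<in>\<I>. \<forall>J\<in>\<I>. I \<noteq> J \<longrightarrow> I \<inter> J = {}) \<and>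
     (\<forall>I\<in>\<I>. \<forall>J\<in>\<I>. I \<noteq> J \<longrightarrow> (\<forall>x\<in>I. \<forall>y\<in>J. \<bar>x - y\<bar> \<ge> pi / real n))"

lemma good_rep:
  assumes g: "good n \<I>" and J: "J \<in> \<I>"
  shows "ea J < eb J" "eb J - ea J \<le> 6 * pi / real n" "pi / real n \<le> eb J - ea J"
    "J = arc (ea J) (eb J)" "\<exists>m::int. eb J - ea J = of_int m * pi / real n"
    "eb J - ea J < 2 * pi"
proof -
  have n: "real n \<ge> 14" using g by (simp add: good_def)
  have "\<forall>J\<in>\<I>. \<exists>a b. a < b \<and> b - a \<le> 6 * pi / real n \<and> J = arc a b \<and> (\<exists>m::int. b - a = of_int m * pi / real n)"
    using g unfolding good_def by (elim conjE)
  then obtain a b m where ab: "a < b" "b - a \<le> 6 * pi / real n" "J = arc a b" "b - a = of_int m * pi / real n"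
    using J by blast
  have "6 * pi / real n < 2 * pi" using n by (simp add: field_simps)
  then have ab2: "b - a < 2 * pi" using ab by simp
  obtain k :: int where k: "ea J = a + 2 * pi * of_int k" "eb J = b + 2 * pi * of_int k"
    using rep_of[OF ab(1) ab2 ab(3)] by blast
  have d: "eb J - ea J = b - a" using k by simp
  show "ea J < eb J" "eb J - ea J \<le> 6 * pi / real n" "eb J - ea J < 2 * pi" using d ab ab2 by auto
  show "J = arc (ea J) (eb J)" using rep_spec[OF ab(1) ab2 ab(3)] by simp
  show "\<exists>m::int. eb J - ea J = of_int m * pi / real n" using d ab by (intro exI[of _ m]) simp
  have pos: "of_int m * pi / real n > 0" using ab by simp
  have "m \<ge> 1"
  proof (rule ccontr)
    assume "\<not> m \<ge> 1"
    then have "of_int m \<le> (0::real)" by simp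
    then have "of_int m * pi \<le> 0" by (simp add: mult_nonpos_nonneg)
    then have "of_int m * pi / real n \<le> 0" using n by (simp add: divide_nonpos_pos)
    then show False using pos by simp
  qed
  then have "of_int m * pi / real n \<ge> 1 * pi / real n" using n by (intro divide_right_mono mult_right_mono) auto
  then show "pi / real n \<le> eb J - ea J" using d ab by simp
qed

lemma good_lift:
  assumes g: "good n \<I>" and J: "J \<in> \<I>" and p: "p \<in> J"
  obtains a b where "a \<le> p" "p \<le> b" "a < b" "b - a \<le> 6 * pi / real n" "pi / real n \<le> b - a"
    "\<And>\<phi>. cJ n J \<phi> = Pf n (b - \<phi>) - Pf n (a - \<phi>)" "\<And>z. a \<le> z \<Longrightarrow> z \<le> b \<Longrightarrow> z \<in> J"
    "J = arc a b" "b - a < 2 * pi"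
proof -
  note r = good_rep[OF g J]
  have "p \<in> arc (ea J) (eb J)" using p r(4) by simp
  then obtain k :: int where k: "ea J \<le> p + 2 * pi * of_int k" "p + 2 * pi * of_int k \<le> eb J"
    unfolding arc_iff by blast
  define a where "a = ea J + 2 * pi * of_int (-k)"
  define b where "b = eb J + 2 * pi * of_int (-k)"
  have arc: "J = arc a b" unfolding a_def b_def arc_shift using r(4) .
  have ab: "a < b" "b - a < 2 * pi" using r unfolding a_def b_def by auto
  show ?thesis
  proof (rule that[of a b])
    show "a \<le> p" "p \<le> b" using k unfolding a_def b_def by auto
    show "a < b" by (rule ab(1))
    show "b - a \<le> 6 * pi / real n" "pi / real n \<le> b - a" using r unfolding a_def b_def by auto
    show "cJ n J \<phi> = Pf n (b - \<phi>) - Pf n (a - \<phi>)" for \<phi> by (rule cJ_rep[OF ab arc])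
    show "z \<in> J" if "a \<le> z" "z \<le> b" for z using arc that arc_base by simp
    show "J = arc a b" by (rule arc)
    show "b - a < 2 * pi" by (rule ab(2))
  qed
qed

lemma good_n: "good n \<I> \<Longrightarrow> n \<ge> 14" by (simp add: good_def)
lemma good_fin: "good n \<I> \<Longrightarrow> finite \<I>" by (simp add: good_def)
lemma good_pi: "good n \<I> \<Longrightarrow> J \<in> \<I> \<Longrightarrow> (\<lambda>\<theta>. pi + \<theta>) ` J \<in> \<I>" by (simp add: good_def)
lemma good_disj: "good n \<I> \<Longrightarrow> I \<in> \<I> \<Longrightarrow> J \<in> \<I> \<Longrightarrow> I \<noteq> J \<Longrightarrow> x \<in> I \<Longrightarrow> x \<in> J \<Longrightarrow> False"
  unfolding good_def by blast
lemma good_sep: "good n \<I> \<Longrightarrow> I \<in> \<I> \<Longrightarrow> J \<in> \<I> \<Longrightarrow> I \<noteq> J \<Longrightarrow> x \<in> I \<Longrightarrow> y \<in> J \<Longrightarrow> \<bar>x - y\<bar> \<ge> pi / real n"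
  unfolding good_def by blast

lemma good_per: "good n \<I> \<Longrightarrow> J \<in> \<I> \<Longrightarrow> p \<in> J \<Longrightarrow> p + 2 * pi * of_int m \<in> J"
  using good_rep(4) arc_per by metis

lemma far_sum:
  assumes g: "good n \<I>" and S: "S \<subseteq> \<I>"
    and far: "\<forall>J\<in>S. \<forall>p\<in>J. \<bar>p - \<phi>\<bar> \<ge> pi / real n \<and> \<bar>p - \<phi> - pi\<bar> \<ge> pi / real n"
  shows "(\<Sum>J\<in>S. \<bar>cJ n J \<phi>\<bar>) \<le> 2 / pi"
proof -
  have n14: "n \<ge> 14" using good_n[OF g] .
  have np: "real n \<ge> 14" using n14 by simp
  have n2: "n \<ge> 2" using n14 by simp
  have finS: "finite S" using good_fin[OF g] S finite_subset by blast
  define d where "d = pi / real n"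
  have d0: "d > 0" unfolding d_def using np by simp
  have d7: "7 * d < pi" unfolding d_def using np by (simp add: field_simps)
  define X0 where "X0 = (\<lambda>J. (ea J - \<phi>) - 2 * pi * of_int \<lfloor>(ea J - \<phi>) / (2 * pi)\<rfloor>)"
  define Y0 where "Y0 = (\<lambda>J. X0 J + (eb J - ea J))"
  have X0r: "0 \<le> X0 J \<and> X0 J < 2 * pi" for J
  proof -
    let ?r = "(ea J - \<phi>) / (2 * pi)"
    have f1: "of_int \<lfloor>?r\<rfloor> \<le> ?r" "?r < of_int \<lfloor>?r\<rfloor> + 1" by linarith+
    have e: "?r * (2 * pi) = ea J - \<phi>" by simp
    have "of_int \<lfloor>?r\<rfloor> * (2 * pi) \<le> ?r * (2 * pi)" using f1 by (intro mult_right_mono) auto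
    moreover have "?r * (2 * pi) < (of_int \<lfloor>?r\<rfloor> + 1) * (2 * pi)" using f1 by (intro mult_strict_right_mono) auto
    ultimately show ?thesis unfolding X0_def e by (simp add: algebra_simps)
  qed
  have props: "cJ n J \<phi> = Pf n (Y0 J) - Pf n (X0 J) \<and> (\<forall>z. X0 J \<le> z \<and> z \<le> Y0 J \<longrightarrow> z + \<phi> \<in> J)
      \<and> d \<le> Y0 J - X0 J \<and> Y0 J - X0 J \<le> 6 * d \<and> (\<exists>m::int. Y0 J - X0 J = of_int m * pi / real n)" if J: "J \<in> \<I>" for J
  proof -
    note r = good_rep[OF g J]
    define k where "k = - \<lfloor>(ea J - \<phi>) / (2 * pi)\<rfloor>"
    have a: "X0 J + \<phi> = ea J + 2 * pi * of_int k" unfolding X0_def k_def by simp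
    have b: "Y0 J + \<phi> = eb J + 2 * pi * of_int k" unfolding Y0_def using a by simp
    have arc: "J = arc (X0 J + \<phi>) (Y0 J + \<phi>)" unfolding a b arc_shift using r(4) .
    have ab: "X0 J + \<phi> < Y0 J + \<phi>" "(Y0 J + \<phi>) - (X0 J + \<phi>) < 2 * pi" using r unfolding Y0_def by auto
    have "cJ n J \<phi> = Pf n (Y0 J) - Pf n (X0 J)" using cJ_rep[OF ab arc, of n \<phi>] by simp
    moreover have "\<forall>z. X0 J \<le> z \<and> z \<le> Y0 J \<longrightarrow> z + \<phi> \<in> J"
      using arc arc_base by auto
    ultimately show ?thesis using r unfolding Y0_def d_def by auto
  qed
  have XY: "X0 J \<le> Y0 J" if "J \<in> \<I>" for J
  proof -
    have "d \<le> Y0 J - X0 J" using props[OF that] by blast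
    then show ?thesis using d0 by linarith
  qed
  have avoid: "\<bar>z\<bar> \<ge> d \<and> \<bar>z - pi\<bar> \<ge> d \<and> \<bar>z - 2 * pi\<bar> \<ge> d" if J: "J \<in> S" and z: "z + \<phi> \<in> J" for J z
  proof -
    have JI: "J \<in> \<I>" using J S by blast
    have "z + \<phi> + 2 * pi * of_int (-1) \<in> J" using good_per[OF g JI z] .
    then have z2: "z - 2 * pi + \<phi> \<in> J" by (simp add: algebra_simps)
    show ?thesis using far J z z2 unfolding d_def by force
  qed
  define SA where "SA = {J\<in>S. X0 J < pi}"
  define SB where "SB = S - SA"
  have claimA: "d \<le> X0 J \<and> Y0 J \<le> pi - d" if J: "J \<in> SA" for J
  proof -
    have JS: "J \<in> S" and JI: "J \<in> \<I>" and lt: "X0 J < pi" using J S unfolding SA_def by auto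
    note p = props[OF JI]
    have inJ: "X0 J + \<phi> \<in> J" using p d0 by auto
    have "\<bar>X0 J\<bar> \<ge> d" using avoid[OF JS inJ] by simp
    then have 1: "d \<le> X0 J" using X0r[of J] by simp
    have 2: "Y0 J \<le> pi - d"
    proof (rule ccontr)
      assume "\<not> Y0 J \<le> pi - d"
      define z where "z = min (Y0 J) pi"
      have "X0 J \<le> z" "z \<le> Y0 J" unfolding z_def using lt p by auto
      then have "z + \<phi> \<in> J" using p by blast
      then have "\<bar>z - pi\<bar> \<ge> d" using avoid[OF JS] by blast
      moreover have "\<bar>z - pi\<bar> < d" unfolding z_def using \<open>\<not> Y0 J \<le> pi - d\<close> d0 by auto
      ultimately show False by simp
    qed
    show ?thesis using 1 2 by simp
  qed
  have claimB: "d \<le> X0 J - pi \<and> Y0 J - pi \<le> pi - d" if J: "J \<in> SB" for J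
  proof -
    have JS: "J \<in> S" and JI: "J \<in> \<I>" and ge: "X0 J \<ge> pi" using J S unfolding SA_def SB_def by auto
    note p = props[OF JI]
    have inJ: "X0 J + \<phi> \<in> J" using p d0 by auto
    have "\<bar>X0 J - pi\<bar> \<ge> d" using avoid[OF JS inJ] by simp
    then have 1: "d \<le> X0 J - pi" using ge by simp
    have 2: "Y0 J - pi \<le> pi - d"
    proof (rule ccontr)
      assume "\<not> Y0 J - pi \<le> pi - d"
      define z where "z = min (Y0 J) (2 * pi)"
      have "X0 J \<le> z" "z \<le> Y0 J" unfolding z_def using X0r[of J] p by auto
      then have "z + \<phi> \<in> J" using p by blast
      then have "\<bar>z - 2 * pi\<bar> \<ge> d" using avoid[OF JS] by blast
      moreover have "\<bar>z - 2 * pi\<bar> < d" unfolding z_def using \<open>\<not> Y0 J - pi \<le> pi - d\<close> d0 by auto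
      ultimately show False by simp
    qed
    show ?thesis using 1 2 by simp
  qed
  have dj: "Y0 J < X0 J' \<or> Y0 J' < X0 J" if "J \<in> S" "J' \<in> S" "J \<noteq> J'" for J J'
  proof (rule ccontr)
    assume "\<not> (Y0 J < X0 J' \<or> Y0 J' < X0 J)"
    then have c: "X0 J' \<le> Y0 J" "X0 J \<le> Y0 J'" by auto
    have JI: "J \<in> \<I>" "J' \<in> \<I>" using that S by auto
    define z where "z = max (X0 J) (X0 J')"
    have "X0 J \<le> z" "z \<le> Y0 J" "X0 J' \<le> z" "z \<le> Y0 J'" unfolding z_def using c props[OF JI(1)] props[OF JI(2)] by auto
    then have "z + \<phi> \<in> J" "z + \<phi> \<in> J'" using props[OF JI(1)] props[OF JI(2)] by blast+
    then show False using good_disj[OF g JI that(3)] by blast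
  qed
  have sumA: "(\<Sum>J\<in>SA. \<bar>cJ n J \<phi>\<bar>) \<le> 1 / pi"
  proof -
    have "(\<Sum>J\<in>SA. \<bar>cJ n J \<phi>\<bar>) = (\<Sum>J\<in>SA. \<bar>Pf n (Y0 J) - Pf n (X0 J)\<bar>)"
      using props S unfolding SA_def by (intro sum.cong) auto
    also have "\<dots> \<le> 1 / pi"
    proof (rule far_family[OF n2])
      show "finite SA" using finS unfolding SA_def by simp
      show "\<forall>J\<in>SA. pi / real n \<le> X0 J \<and> X0 J \<le> Y0 J \<and> Y0 J \<le> pi - pi / real n \<and> (\<exists>m::int. Y0 J - X0 J = of_int m * pi / real n)"
        using claimA props S XY unfolding SA_def d_def by blast
      show "\<forall>J\<in>SA. \<forall>J'\<in>SA. J \<noteq> J' \<longrightarrow> Y0 J < X0 J' \<or> Y0 J' < X0 J"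
        using dj unfolding SA_def by auto
    qed
    finally show ?thesis .
  qed
  have sumB: "(\<Sum>J\<in>SB. \<bar>cJ n J \<phi>\<bar>) \<le> 1 / pi"
  proof -
    have "(\<Sum>J\<in>SB. \<bar>cJ n J \<phi>\<bar>) = (\<Sum>J\<in>SB. \<bar>Pf n (Y0 J - pi) - Pf n (X0 J - pi)\<bar>)"
    proof (intro sum.cong refl)
      fix J assume "J \<in> SB"
      then have JI: "J \<in> \<I>" using S unfolding SB_def by auto
      show "\<bar>cJ n J \<phi>\<bar> = \<bar>Pf n (Y0 J - pi) - Pf n (X0 J - pi)\<bar>"
        using props[OF JI] by (simp add: Pf_mpi)
    qed
    also have "\<dots> \<le> 1 / pi"
    proof (rule far_family[OF n2, where X="\<lambda>J. X0 J - pi" and Y="\<lambda>J. Y0 J - pi"])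
      show "finite SB" using finS unfolding SB_def by simp
      show "\<forall>J\<in>SB. pi / real n \<le> X0 J - pi \<and> X0 J - pi \<le> Y0 J - pi \<and> Y0 J - pi \<le> pi - pi / real n \<and> (\<exists>m::int. Y0 J - pi - (X0 J - pi) = of_int m * pi / real n)"
        using claimB props S XY unfolding SB_def d_def by fastforce
      show "\<forall>J\<in>SB. \<forall>J'\<in>SB. J \<noteq> J' \<longrightarrow> Y0 J - pi < X0 J' - pi \<or> Y0 J' - pi < X0 J - pi"
        using dj unfolding SB_def by auto
    qed
    finally show ?thesis .
  qed
  have "(\<Sum>J\<in>S. \<bar>cJ n J \<phi>\<bar>) = (\<Sum>J\<in>SA. \<bar>cJ n J \<phi>\<bar>) + (\<Sum>J\<in>SB. \<bar>cJ n J \<phi>\<bar>)"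
    unfolding SB_def using sum.subset_diff[of SA S "\<lambda>J. \<bar>cJ n J \<phi>\<bar>"] finS by (auto simp: SA_def)
  then show ?thesis using sumA sumB by simp
qed

lemma Pf_near_pos:
  assumes n: "n \<ge> 14" and x: "0 \<le> x" "x \<le> 7 * pi / real n"
  shows "0 \<le> Pf n x \<and> Pf n x \<le> 1"
proof -
  have np: "real n \<ge> 14" using n by simp
  have "7 * pi / real n \<le> pi / 2" using np by (simp add: field_simps)
  then have xp: "x \<le> pi / 2" using x by simp
  have "0 \<le> Pf n x" "Pf n x \<le> Pf n (xk n 1)" using P_range[of n x] n x xp by auto
  moreover have "Pf n (xk n 1) \<le> 1" using P_x1_upper n by simp
  ultimately show ?thesis by simp
qed

lemma Pf_near_neg:
  assumes n: "n \<ge> 14" and x: "- (7 * pi / real n) \<le> x" "x \<le> 0"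
  shows "- 1 \<le> Pf n x \<and> Pf n x \<le> 0"
  using Pf_near_pos[OF n, of "-x"] x Pf_neg[of n x] by simp

lemma sum_at_most_one:
  assumes "finite S" "\<forall>x\<in>S. \<forall>y\<in>S. x = y" "\<forall>x\<in>S. \<bar>f x\<bar> \<le> B" "0 \<le> B"
  shows "\<bar>sum f S\<bar> \<le> (B::real)"
proof (cases "S = {}")
  case True then show ?thesis using assms by simp
next
  case False
  then obtain x where x: "x \<in> S" by blast
  then have "S = {x}" using assms(2) by blast
  then show ?thesis using assms(3) x by simp
qed

lemma near_sum:
  assumes g: "good n \<I>" and S: "S \<subseteq> \<I>"
    and near: "\<forall>J\<in>S. \<exists>p\<in>J. \<bar>p - \<phi>\<bar> < pi / real n"
    and al: "\<forall>J. \<bar>\<alpha> J\<bar> \<le> 1"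
  shows "\<bar>\<Sum>J\<in>S. \<alpha> J * cJ n J \<phi>\<bar> \<le> 2"
proof -
  have n14: "n \<ge> 14" using good_n[OF g] .
  have np: "real n \<ge> 14" using n14 by simp
  have finS: "finite S" using good_fin[OF g] S finite_subset by blast
  define d where "d = pi / real n"
  have d0: "d > 0" unfolding d_def using np by simp
  have t1: "\<bar>\<alpha> J * cJ n J \<phi>\<bar> \<le> \<bar>cJ n J \<phi>\<bar>" for J
    using al[rule_format, of J] by (simp add: abs_mult mult_left_le_one_le)
  show ?thesis
  proof (cases "\<exists>J0\<in>S. \<phi> \<in> J0")
    case True
    then obtain J0 where J0: "J0 \<in> S" "\<phi> \<in> J0" by blast
    have J0I: "J0 \<in> \<I>" using J0 S by blast
    have one: "\<forall>x\<in>S. \<forall>y\<in>S. x = y"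
    proof -
      have "J = J0" if J: "J \<in> S" for J
      proof (rule ccontr)
        assume ne: "J \<noteq> J0"
        obtain p where p: "p \<in> J" "\<bar>p - \<phi>\<bar> < d" using near J unfolding d_def by blast
        have JI: "J \<in> \<I>" using J S by blast
        have "\<bar>\<phi> - p\<bar> \<ge> pi / real n" by (rule good_sep[OF g J0I JI ne[symmetric] J0(2) p(1)])
        then have "\<bar>\<phi> - p\<bar> \<ge> d" unfolding d_def .
        then show False using p by simp
      qed
      then show ?thesis by blast
    qed
    have bnd: "\<bar>\<alpha> J0 * cJ n J0 \<phi>\<bar> \<le> 2"
    proof -
      obtain a b where ab: "a \<le> \<phi>" "\<phi> \<le> b" "a < b" "b - a \<le> 6 * pi / real n" "pi / real n \<le> b - a"
        "\<And>\<psi>. cJ n J0 \<psi> = Pf n (b - \<psi>) - Pf n (a - \<psi>)" "\<And>z. a \<le> z \<Longrightarrow> z \<le> b \<Longrightarrow> z \<in> J0"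
        "J0 = arc a b" "b - a < 2 * pi"
        by (rule good_lift[OF g J0I J0(2)]) blast
      have "6 * pi / real n \<le> 7 * pi / real n" using np by (simp add: divide_right_mono)
      then have h1: "0 \<le> Pf n (b - \<phi>) \<and> Pf n (b - \<phi>) \<le> 1" using Pf_near_pos[OF n14, of "b - \<phi>"] ab by simp
      have h2: "- 1 \<le> Pf n (a - \<phi>) \<and> Pf n (a - \<phi>) \<le> 0"
        using Pf_near_neg[OF n14, of "a - \<phi>"] ab \<open>6 * pi / real n \<le> 7 * pi / real n\<close> by simp
      have "\<bar>cJ n J0 \<phi>\<bar> \<le> 2" using h1 h2 ab(6)[of \<phi>] by simp
      then show ?thesis using t1[of J0] by simp
    qed
    have all: "\<forall>x\<in>S. \<bar>\<alpha> x * cJ n x \<phi>\<bar> \<le> 2"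
    proof
      fix x assume "x \<in> S"
      then have "x = J0" using one J0(1) by blast
      then show "\<bar>\<alpha> x * cJ n x \<phi>\<bar> \<le> 2" using bnd by simp
    qed
    show ?thesis using sum_at_most_one[OF finS one all] by simp
  next
    case False
    define SR where "SR = {J\<in>S. \<exists>q\<in>J. \<phi> < q \<and> q < \<phi> + d}"
    define SL where "SL = S - SR"
    have SRb: "\<bar>\<alpha> J * cJ n J \<phi>\<bar> \<le> 1" if J: "J \<in> SR" for J
    proof -
      obtain q where q: "q \<in> J" "\<phi> < q" "q < \<phi> + d" using J unfolding SR_def by blast
      have JI: "J \<in> \<I>" "J \<in> S" using J S unfolding SR_def by auto
      obtain a b where ab: "a \<le> q" "q \<le> b" "a < b" "b - a \<le> 6 * pi / real n" "pi / real n \<le> b - a"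
        "\<And>\<psi>. cJ n J \<psi> = Pf n (b - \<psi>) - Pf n (a - \<psi>)" "\<And>z. a \<le> z \<Longrightarrow> z \<le> b \<Longrightarrow> z \<in> J"
        "J = arc a b" "b - a < 2 * pi"
        by (rule good_lift[OF g JI(1) q(1)]) blast
      have "\<phi> \<notin> J" using False JI(2) by blast
      then have "\<phi> < a" using ab(7)[of \<phi>] q ab by linarith
      have "0 \<le> a - \<phi>" "a - \<phi> \<le> 7 * pi / real n" "0 \<le> b - \<phi>" "b - \<phi> \<le> 7 * pi / real n"
      proof -
        have e7: "7 * pi / real n = pi / real n + 6 * pi / real n" by (simp add: field_simps)
        show "0 \<le> a - \<phi>" "a - \<phi> \<le> 7 * pi / real n" "0 \<le> b - \<phi>" "b - \<phi> \<le> 7 * pi / real n"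
          using \<open>\<phi> < a\<close> q ab e7 d0 unfolding d_def by linarith+
      qed
      then have "0 \<le> Pf n (a - \<phi>) \<and> Pf n (a - \<phi>) \<le> 1" "0 \<le> Pf n (b - \<phi>) \<and> Pf n (b - \<phi>) \<le> 1"
        using Pf_near_pos[OF n14] by auto
      then have "\<bar>cJ n J \<phi>\<bar> \<le> 1" using ab(6)[of \<phi>] by (simp add: abs_le_iff)
      then show ?thesis using t1[of J] by simp
    qed
    have SLq: "\<exists>q\<in>J. \<phi> - d < q \<and> q < \<phi> \<and> \<bar>\<alpha> J * cJ n J \<phi>\<bar> \<le> 1" if J: "J \<in> SL" for J
    proof -
      have JI: "J \<in> \<I>" "J \<in> S" using J S unfolding SL_def by auto
      obtain p where p: "p \<in> J" "\<bar>p - \<phi>\<bar> < d" using near JI(2) unfolding d_def by blast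
      obtain a b where ab: "a \<le> p" "p \<le> b" "a < b" "b - a \<le> 6 * pi / real n" "pi / real n \<le> b - a"
        "\<And>\<psi>. cJ n J \<psi> = Pf n (b - \<psi>) - Pf n (a - \<psi>)" "\<And>z. a \<le> z \<Longrightarrow> z \<le> b \<Longrightarrow> z \<in> J"
        "J = arc a b" "b - a < 2 * pi"
        by (rule good_lift[OF g JI(1) p(1)]) blast
      have nphi: "\<phi> \<notin> J" using False JI(2) by blast
      have "\<not> \<phi> < a"
      proof
        assume "\<phi> < a"
        then have "a \<in> J" "\<phi> < a" "a < \<phi> + d" using ab p by auto
        then have "J \<in> SR" unfolding SR_def using JI by blast
        then show False using J unfolding SL_def by blast
      qed
      have "b < \<phi>"
      proof (rule ccontr)
        assume "\<not> b < \<phi>"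
        then have "\<phi> \<in> J" using ab(7)[of \<phi>] \<open>\<not> \<phi> < a\<close> by simp
        then show False using nphi by simp
      qed
      have bJ: "b \<in> J" using ab by simp
      have "- (7 * pi / real n) \<le> a - \<phi>" "a - \<phi> \<le> 0" "- (7 * pi / real n) \<le> b - \<phi>" "b - \<phi> \<le> 0"
      proof -
        have e7: "7 * pi / real n = pi / real n + 6 * pi / real n" by (simp add: field_simps)
        have "p - \<phi> > - d" using p by (simp add: abs_less_iff)
        then show "- (7 * pi / real n) \<le> a - \<phi>" "a - \<phi> \<le> 0" "- (7 * pi / real n) \<le> b - \<phi>" "b - \<phi> \<le> 0"
          using \<open>b < \<phi>\<close> p ab e7 d0 unfolding d_def by linarith+
      qed
      then have "- 1 \<le> Pf n (a - \<phi>) \<and> Pf n (a - \<phi>) \<le> 0" "- 1 \<le> Pf n (b - \<phi>) \<and> Pf n (b - \<phi>) \<le> 0"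
        using Pf_near_neg[OF n14] by auto
      then have "\<bar>cJ n J \<phi>\<bar> \<le> 1" using ab(6)[of \<phi>] by (simp add: abs_le_iff)
      then have "\<bar>\<alpha> J * cJ n J \<phi>\<bar> \<le> 1" using t1[of J] by simp
      moreover have "\<phi> - d < b" using p ab by auto
      ultimately show ?thesis using bJ \<open>b < \<phi>\<close> by blast
    qed
    have oneR: "\<forall>x\<in>SR. \<forall>y\<in>SR. x = y"
    proof (intro ballI, rule ccontr)
      fix x y assume xy: "x \<in> SR" "y \<in> SR" "x \<noteq> y"
      obtain q1 where q1: "q1 \<in> x" "\<phi> < q1" "q1 < \<phi> + d" using xy unfolding SR_def by blast
      obtain q2 where q2: "q2 \<in> y" "\<phi> < q2" "q2 < \<phi> + d" using xy unfolding SR_def by blast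
      have xI: "x \<in> \<I>" "y \<in> \<I>" using xy S unfolding SR_def by auto
      have "\<bar>q1 - q2\<bar> \<ge> pi / real n" by (rule good_sep[OF g xI(1) xI(2) xy(3) q1(1) q2(1)])
      then have "\<bar>q1 - q2\<bar> \<ge> d" unfolding d_def .
      then show False using q1 q2 by auto
    qed
    have oneL: "\<forall>x\<in>SL. \<forall>y\<in>SL. x = y"
    proof (intro ballI, rule ccontr)
      fix x y assume xy: "x \<in> SL" "y \<in> SL" "x \<noteq> y"
      obtain q1 where q1: "q1 \<in> x" "\<phi> - d < q1" "q1 < \<phi>" using SLq xy(1) by blast
      obtain q2 where q2: "q2 \<in> y" "\<phi> - d < q2" "q2 < \<phi>" using SLq xy(2) by blast
      have xI: "x \<in> \<I>" "y \<in> \<I>" using xy S unfolding SL_def by auto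
      have "\<bar>q1 - q2\<bar> \<ge> pi / real n" by (rule good_sep[OF g xI(1) xI(2) xy(3) q1(1) q2(1)])
      then have "\<bar>q1 - q2\<bar> \<ge> d" unfolding d_def .
      then show False using q1 q2 by auto
    qed
    have fR: "finite SR" "finite SL" using finS unfolding SR_def SL_def by auto
    have bR: "\<bar>\<Sum>J\<in>SR. \<alpha> J * cJ n J \<phi>\<bar> \<le> 1" using sum_at_most_one[OF fR(1) oneR] SRb by simp
    have allL: "\<forall>x\<in>SL. \<bar>\<alpha> x * cJ n x \<phi>\<bar> \<le> 1" using SLq by blast
    have bL: "\<bar>\<Sum>J\<in>SL. \<alpha> J * cJ n J \<phi>\<bar> \<le> 1" using sum_at_most_one[OF fR(2) oneL allL] by simp
    have "(\<Sum>J\<in>S. \<alpha> J * cJ n J \<phi>) = (\<Sum>J\<in>SR. \<alpha> J * cJ n J \<phi>) + (\<Sum>J\<in>SL. \<alpha> J * cJ n J \<phi>)"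
      unfolding SL_def using sum.subset_diff[of SR S "\<lambda>J. \<alpha> J * cJ n J \<phi>"] finS by (auto simp: SR_def)
    then show ?thesis using bR bL abs_triangle_ineq[of "\<Sum>J\<in>SR. \<alpha> J * cJ n J \<phi>" "\<Sum>J\<in>SL. \<alpha> J * cJ n J \<phi>"] by linarith
  qed
qed



lemma arc_image_pi: "(\<lambda>x. pi + x) ` arc a b = arc (a + pi) (b + pi)"
proof -
  have "x \<in> arc (a + pi) (b + pi) \<longleftrightarrow> x - pi \<in> arc a b" for x
    unfolding arc_iff by (simp add: algebra_simps)
  then show ?thesis by (auto simp: image_iff intro!: bexI[of _ "_ - pi"])
qed

lemma T_upper:
  assumes g: "good n \<I>" and al: "\<forall>J. \<bar>\<alpha> J\<bar> \<le> 1"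
  shows "\<bar>Tf n \<I> \<alpha> \<phi>\<bar> \<le> 5"
proof -
  have fin: "finite \<I>" using good_fin[OF g] .
  define A where "A = {J\<in>\<I>. \<exists>p\<in>J. \<bar>p - \<phi>\<bar> < pi / real n}"
  define B where "B = {J\<in>\<I>. \<exists>p\<in>J. \<bar>p - (\<phi> + pi)\<bar> < pi / real n} - A"
  define C where "C = \<I> - A - B"
  let ?f = "\<lambda>J. \<alpha> J * cJ n J \<phi>"
  have split: "Tf n \<I> \<alpha> \<phi> = sum ?f A + sum ?f B + sum ?f C"
  proof -
    have hA: "A \<subseteq> \<I>" unfolding A_def by blast
    have hB: "B \<subseteq> \<I> - A" unfolding B_def A_def by blast
    have "sum ?f \<I> = sum ?f (\<I> - A) + sum ?f A"
      by (rule sum.subset_diff[OF hA fin])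
    moreover have "sum ?f (\<I> - A) = sum ?f (\<I> - A - B) + sum ?f B"
      by (rule sum.subset_diff[OF hB]) (use fin in simp)
    ultimately show ?thesis unfolding Tf_def C_def by simp
  qed
  have bA: "\<bar>sum ?f A\<bar> \<le> 2"
    by (rule near_sum[OF g _ _ al]) (auto simp: A_def)
  have bB: "\<bar>sum ?f B\<bar> \<le> 2"
  proof -
    have "sum ?f B = - (\<Sum>J\<in>B. \<alpha> J * cJ n J (\<phi> + pi))"
      by (simp add: cJ_pi sum_negf[symmetric])
    moreover have "\<bar>\<Sum>J\<in>B. \<alpha> J * cJ n J (\<phi> + pi)\<bar> \<le> 2"
      by (rule near_sum[OF g _ _ al]) (auto simp: B_def)
    ultimately show ?thesis by simp
  qed
  have bC: "\<bar>sum ?f C\<bar> \<le> 2 / pi"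
  proof -
    have "\<bar>sum ?f C\<bar> \<le> (\<Sum>J\<in>C. \<bar>?f J\<bar>)" by (rule sum_abs)
    also have "\<dots> \<le> (\<Sum>J\<in>C. \<bar>cJ n J \<phi>\<bar>)"
    proof (rule sum_mono)
      fix J show "\<bar>?f J\<bar> \<le> \<bar>cJ n J \<phi>\<bar>"
        using al[rule_format, of J] by (simp add: abs_mult mult_left_le_one_le)
    qed
    also have "\<dots> \<le> 2 / pi"
    proof (rule far_sum[OF g])
      show "C \<subseteq> \<I>" unfolding C_def by blast
      show "\<forall>J\<in>C. \<forall>p\<in>J. pi / real n \<le> \<bar>p - \<phi>\<bar> \<and> pi / real n \<le> \<bar>p - \<phi> - pi\<bar>"
      proof (intro ballI)
        fix J p assume J: "J \<in> C" and p: "p \<in> J"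
        have "J \<in> \<I>" "J \<notin> A" "J \<notin> B" using J unfolding C_def by auto
        then have "\<not> \<bar>p - \<phi>\<bar> < pi / real n" "\<not> \<bar>p - (\<phi> + pi)\<bar> < pi / real n"
          using p unfolding A_def B_def by auto
        then show "pi / real n \<le> \<bar>p - \<phi>\<bar> \<and> pi / real n \<le> \<bar>p - \<phi> - pi\<bar>" by (simp add: algebra_simps)
      qed
    qed
    finally show ?thesis .
  qed
  have "2 / pi \<le> 1" using pi_ge_two by simp
  then show ?thesis using split bA bB bC abs_triangle_ineq[of "sum ?f A + sum ?f B" "sum ?f C"]
    abs_triangle_ineq[of "sum ?f A" "sum ?f B"] by linarith
qed

lemma c_main_lower:
  assumes g: "good n \<I>" and I: "I \<in> \<I>" and th: "\<theta> \<in> I"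
  shows "cJ n I \<theta> \<ge> 1/3 + 1/pi"
proof -
  have n14: "n \<ge> 14" using good_n[OF g] .
  have np: "real n \<ge> 14" using n14 by simp
  obtain a b where ab: "a \<le> \<theta>" "\<theta> \<le> b" "a < b" "b - a \<le> 6 * pi / real n" "pi / real n \<le> b - a"
    "\<And>\<psi>. cJ n I \<psi> = Pf n (b - \<psi>) - Pf n (a - \<psi>)" "\<And>z. a \<le> z \<Longrightarrow> z \<le> b \<Longrightarrow> z \<in> I"
    "I = arc a b" "b - a < 2 * pi"
    by (rule good_lift[OF g I th]) blast
  define u where "u = \<theta> - a"
  define v where "v = b - \<theta>"
  have c: "cJ n I \<theta> = Pf n v + Pf n u"
    using ab(6)[of \<theta>] Pf_neg[of n u] unfolding u_def v_def by simp
  have h6: "6 * pi / real n \<le> pi / 2" using np by (simp add: field_simps)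
  have uv: "0 \<le> u" "u \<le> pi / 2" "0 \<le> v" "v \<le> pi / 2" "u + v \<ge> pi / real n"
    using ab h6 unfolding u_def v_def by auto
  have n2: "n \<ge> 2" using n14 by simp
  have x1: "xk n 1 = pi / (2 * real n)" using n14 by (simp add: xk_def)
  have low: "Pf n (xk n 2) \<ge> 1/3 + 1/pi" using P_x2_lower n14 by simp
  have p0: "0 \<le> Pf n u" "0 \<le> Pf n v" using P_range(1)[OF n2] uv by auto
  show ?thesis
  proof (cases "u \<ge> v")
    case True
    then have "u \<ge> xk n 1" using uv x1 by (simp add: field_simps)
    then have "Pf n u \<ge> Pf n (xk n 2)" using P_range(3)[OF n2] uv by auto
    then show ?thesis using c p0 low by linarith
  next
    case False
    then have "v \<ge> xk n 1" using uv x1 by (simp add: field_simps)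
    then have "Pf n v \<ge> Pf n (xk n 2)" using P_range(3)[OF n2] uv by auto
    then show ?thesis using c p0 low by linarith
  qed
qed

lemma T_lower:
  assumes g: "good n \<I>" and I: "I \<in> \<I>" and th: "\<theta> \<in> I"
    and al: "\<forall>J. \<bar>\<alpha> J\<bar> \<le> 1" and aI: "\<alpha> I * \<alpha> I = 1"
    and api: "\<alpha> ((\<lambda>x. pi + x) ` I) = - \<alpha> I"
  shows "\<alpha> I * Tf n \<I> \<alpha> \<theta> \<ge> 2 / 3"
proof -
  have n14: "n \<ge> 14" using good_n[OF g] .
  have np: "real n \<ge> 14" using n14 by simp
  have fin: "finite \<I>" using good_fin[OF g] .
  define I2 where "I2 = (\<lambda>x. pi + x) ` I"
  have I2: "I2 \<in> \<I>" unfolding I2_def by (rule good_pi[OF g I])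
  have I2arc: "I2 = arc (ea I + pi) (eb I + pi)"
    unfolding I2_def using good_rep(4)[OF g I] arc_image_pi by metis
  have rI: "ea I < eb I" "eb I - ea I < 2 * pi" using good_rep[OF g I] by auto
  have cI2: "cJ n I2 \<theta> = - cJ n I \<theta>"
  proof -
    have "cJ n I2 \<theta> = Pf n (eb I + pi - \<theta>) - Pf n (ea I + pi - \<theta>)"
      by (rule cJ_rep) (use rI I2arc in auto)
    also have "Pf n (eb I + pi - \<theta>) = - Pf n (eb I - \<theta>)" using Pf_pi[of n "eb I - \<theta>"] by (simp add: algebra_simps)
    also have "Pf n (ea I + pi - \<theta>) = - Pf n (ea I - \<theta>)" using Pf_pi[of n "ea I - \<theta>"] by (simp add: algebra_simps)
    finally show ?thesis unfolding cJ_def by simp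
  qed
  have th2: "\<theta> + pi \<in> I2" unfolding I2_def using th by (simp add: image_iff)
  have ne: "I2 \<noteq> I"
  proof
    assume eq: "I2 = I"
    obtain a b where ab: "a \<le> \<theta>" "\<theta> \<le> b" "a < b" "b - a \<le> 6 * pi / real n" "pi / real n \<le> b - a"
      "\<And>\<psi>. cJ n I \<psi> = Pf n (b - \<psi>) - Pf n (a - \<psi>)" "\<And>z. a \<le> z \<Longrightarrow> z \<le> b \<Longrightarrow> z \<in> I"
      "I = arc a b" "b - a < 2 * pi"
      by (rule good_lift[OF g I th]) blast
    have h6: "6 * pi / real n < pi" using np by (simp add: field_simps)
    have "\<theta> + pi \<in> arc a b" using th2 eq ab(8) by simp
    then have "\<theta> + pi \<le> b" using arc_window[of a b "\<theta> + pi"] ab h6 by simp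
    then show False using ab h6 by simp
  qed
  define R where "R = \<I> - {I, I2}"
  let ?f = "\<lambda>J. \<alpha> J * cJ n J \<theta>"
  have split: "Tf n \<I> \<alpha> \<theta> = ?f I + ?f I2 + sum ?f R"
  proof -
    have sub: "{I, I2} \<subseteq> \<I>" using I I2 by simp
    have "sum ?f \<I> = sum ?f R + sum ?f {I, I2}"
      unfolding R_def by (rule sum.subset_diff[OF sub fin])
    also have "sum ?f {I, I2} = ?f I + ?f I2" using ne by simp
    finally show ?thesis unfolding Tf_def by simp
  qed
  have main: "?f I + ?f I2 = 2 * \<alpha> I * cJ n I \<theta>"
    using cI2 api unfolding I2_def by simp
  have bR: "\<bar>sum ?f R\<bar> \<le> 2 / pi"
  proof -
    have "\<bar>sum ?f R\<bar> \<le> (\<Sum>J\<in>R. \<bar>?f J\<bar>)" by (rule sum_abs)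
    also have "\<dots> \<le> (\<Sum>J\<in>R. \<bar>cJ n J \<theta>\<bar>)"
    proof (rule sum_mono)
      fix J show "\<bar>?f J\<bar> \<le> \<bar>cJ n J \<theta>\<bar>"
        using al[rule_format, of J] by (simp add: abs_mult mult_left_le_one_le)
    qed
    also have "\<dots> \<le> 2 / pi"
    proof (rule far_sum[OF g])
      show "R \<subseteq> \<I>" unfolding R_def by blast
      show "\<forall>J\<in>R. \<forall>p\<in>J. pi / real n \<le> \<bar>p - \<theta>\<bar> \<and> pi / real n \<le> \<bar>p - \<theta> - pi\<bar>"
      proof (intro ballI)
        fix J p assume J: "J \<in> R" and p: "p \<in> J"
        have JI: "J \<in> \<I>" and n1: "J \<noteq> I" and n2: "J \<noteq> I2" using J unfolding R_def by auto
        have "\<bar>\<theta> - p\<bar> \<ge> pi / real n" by (rule good_sep[OF g I JI n1[symmetric] th p])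
        moreover have "\<bar>(\<theta> + pi) - p\<bar> \<ge> pi / real n" by (rule good_sep[OF g I2 JI n2[symmetric] th2 p])
        ultimately show "pi / real n \<le> \<bar>p - \<theta>\<bar> \<and> pi / real n \<le> \<bar>p - \<theta> - pi\<bar>"
          by (simp add: abs_minus_commute algebra_simps)
      qed
    qed
    finally show ?thesis .
  qed
  have cl: "cJ n I \<theta> \<ge> 1/3 + 1/pi" by (rule c_main_lower[OF g I th])
  have "\<alpha> I * Tf n \<I> \<alpha> \<theta> = 2 * (\<alpha> I * \<alpha> I) * cJ n I \<theta> + \<alpha> I * sum ?f R"
    unfolding split main by (simp add: algebra_simps)
  also have "\<dots> = 2 * cJ n I \<theta> + \<alpha> I * sum ?f R" using aI by simp
  finally have eq: "\<alpha> I * Tf n \<I> \<alpha> \<theta> = 2 * cJ n I \<theta> + \<alpha> I * sum ?f R" .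
  have "\<bar>\<alpha> I * sum ?f R\<bar> \<le> 2 / pi"
  proof -
    have "\<bar>\<alpha> I\<bar> * \<bar>sum ?f R\<bar> \<le> 1 * \<bar>sum ?f R\<bar>"
      using al[rule_format, of I] by (intro mult_right_mono) auto
    then show ?thesis using bR by (simp add: abs_mult)
  qed
  then show ?thesis using eq cl by (simp add: abs_le_iff)
qed



lemma sin_integral_interval:
  assumes j: "j > 0" and cd: "c \<le> d"
  shows "((\<lambda>x. sin (real j * x)) has_integral (cos (real j * c) - cos (real j * d)) / real j) {c..d}"
proof -
  have "((\<lambda>x. sin (real j * x)) has_integral ((\<lambda>x. - cos (real j * x) / real j) d - (\<lambda>x. - cos (real j * x) / real j) c)) {c..d}"
  proof (rule fundamental_theorem_of_calculus[OF cd])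
    fix x assume "x \<in> {c..d}"
    have "((\<lambda>x. - cos (real j * x) / real j) has_real_derivative sin (real j * x)) (at x within {c..d})"
      using j by (auto intro!: derivative_eq_intros)
    then show "((\<lambda>x. - cos (real j * x) / real j) has_vector_derivative sin (real j * x)) (at x within {c..d})"
      by (simp add: has_real_derivative_iff_has_vector_derivative)
  qed
  then show ?thesis by (simp add: diff_divide_distrib)
qed

lemma ind_sin_integral:
  assumes j: "j > 0" and c: "-pi \<le> c" and d: "d \<le> pi"
  shows "((\<lambda>x. indicator {c..d} x * sin (real j * x)) has_integral
          (if c \<le> d then (cos (real j * c) - cos (real j * d)) / real j else 0)) {-pi..pi}"
proof (cases "c \<le> d")
  case True
  have e: "(\<lambda>x. indicator {c..d} x * sin (real j * x)) = (\<lambda>x. if x \<in> {c..d} then sin (real j * x) else 0)"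
    by (auto simp: indicator_def)
  have s: "{c..d} \<inter> {-pi..pi} = {c..d}" using c d by auto
  show ?thesis unfolding e has_integral_restrict_Int s using sin_integral_interval[OF j True] True by simp
next
  case False
  then have "{c..d} = {}" by simp
  then show ?thesis using False by simp
qed

lemma arc_indicator_integral:
  assumes j: "j > 0" and ab: "a < b" "b - a < 2 * pi"
  shows "((\<lambda>x. indicator (arc a b) x * sin (real j * x)) has_integral (cos (real j * a) - cos (real j * b)) / real j) {-pi..pi}"
proof -
  define k where "k = \<lfloor>(pi - a) / (2 * pi)\<rfloor>"
  define a' where "a' = a + 2 * pi * of_int k"
  define b' where "b' = b + 2 * pi * of_int k"
  have k1: "of_int k * (2 * pi) \<le> pi - a"
  proof -
    have "of_int k \<le> (pi - a) / (2 * pi)" unfolding k_def by linarith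
    then have "of_int k * (2 * pi) \<le> (pi - a) / (2 * pi) * (2 * pi)" by (intro mult_right_mono) auto
    then show ?thesis by simp
  qed
  have k2: "pi - a < (of_int k + 1) * (2 * pi)"
  proof -
    have "(pi - a) / (2 * pi) < of_int k + 1" unfolding k_def by linarith
    then have "(pi - a) / (2 * pi) * (2 * pi) < (of_int k + 1) * (2 * pi)" by (intro mult_strict_right_mono) auto
    then show ?thesis by simp
  qed
  have a'r: "-pi < a'" "a' \<le> pi" using k1 k2 unfolding a'_def by (auto simp: algebra_simps)
  have ab': "a' < b'" "b' - a' < 2 * pi" using ab unfolding a'_def b'_def by auto
  have arc: "arc a b = arc a' b'" unfolding a'_def b'_def arc_shift ..
  have ind: "indicator (arc a b) x * sin (real j * x) =
        indicator {a'..min b' pi} x * sin (real j * x) + indicator {-pi..b' - 2 * pi} x * sin (real j * x)"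
    if x: "x \<in> {-pi..pi}" for x
  proof -
    have mem: "x \<in> arc a' b' \<longleftrightarrow> (x \<in> {a'..min b' pi} \<or> x \<in> {-pi..b' - 2 * pi})"
    proof (cases "a' \<le> x")
      case True
      have "x \<in> arc a' b' \<longleftrightarrow> x \<le> b'" using arc_window[of a' b' x] ab' True x a'r by auto
      then show ?thesis using True x ab' by auto
    next
      case False
      have "x + 2 * pi * of_int 1 \<in> arc a' b' \<longleftrightarrow> x + 2 * pi \<le> b'"
        using arc_window[of a' b' "x + 2 * pi"] ab' False x a'r by auto
      moreover have "x \<in> arc a' b' \<longleftrightarrow> x + 2 * pi * of_int 1 \<in> arc a' b'"
        using arc_per[of x a' b' 1] arc_per[of "x + 2 * pi * of_int 1" a' b' "-1"] by auto
      ultimately show ?thesis using False x by auto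
    qed
    have disj: "\<not> (x \<in> {a'..min b' pi} \<and> x \<in> {-pi..b' - 2 * pi})" using ab' by auto
    show ?thesis unfolding arc using mem disj by (auto simp: indicator_def)
  qed
  have i1: "((\<lambda>x. indicator {a'..min b' pi} x * sin (real j * x)) has_integral
      (if a' \<le> min b' pi then (cos (real j * a') - cos (real j * min b' pi)) / real j else 0)) {-pi..pi}"
    by (rule ind_sin_integral[OF j]) (use a'r in auto)
  have i2: "((\<lambda>x. indicator {-pi..b' - 2 * pi} x * sin (real j * x)) has_integral
      (if -pi \<le> b' - 2 * pi then (cos (real j * (-pi)) - cos (real j * (b' - 2 * pi))) / real j else 0)) {-pi..pi}"
    by (rule ind_sin_integral[OF j]) (use ab' a'r in auto)
  have sum: "((\<lambda>x. indicator (arc a b) x * sin (real j * x)) has_integral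
      ((if a' \<le> min b' pi then (cos (real j * a') - cos (real j * min b' pi)) / real j else 0) +
       (if -pi \<le> b' - 2 * pi then (cos (real j * (-pi)) - cos (real j * (b' - 2 * pi))) / real j else 0))) {-pi..pi}"
    using has_integral_add[OF i1 i2] by (rule has_integral_eq[rotated]) (use ind in simp)
  have ca: "cos (real j * a') = cos (real j * a)"
  proof -
    have "real j * a' = real j * a + 2 * pi * of_int (int j * k)" unfolding a'_def by (simp add: algebra_simps)
    then show ?thesis by (simp only: cos_add_2pi_int)
  qed
  have cb: "cos (real j * b') = cos (real j * b)"
  proof -
    have "real j * b' = real j * b + 2 * pi * of_int (int j * k)" unfolding b'_def by (simp add: algebra_simps)
    then show ?thesis by (simp only: cos_add_2pi_int)
  qed
  have cb2: "cos (real j * (b' - 2 * pi)) = cos (real j * b')"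
  proof -
    have "real j * b' = real j * (b' - 2 * pi) + 2 * pi * of_int (int j)" by (simp add: algebra_simps)
    then show ?thesis by (simp only: cos_add_2pi_int)
  qed
  have cpi: "cos (real j * (-pi)) = cos (real j * pi)" by simp
  have val: "(if a' \<le> min b' pi then (cos (real j * a') - cos (real j * min b' pi)) / real j else 0) +
       (if -pi \<le> b' - 2 * pi then (cos (real j * (-pi)) - cos (real j * (b' - 2 * pi))) / real j else 0)
     = (cos (real j * a) - cos (real j * b)) / real j"
  proof (cases "b' \<le> pi")
    case True
    have m: "min b' pi = b'" using True by simp
    show ?thesis
    proof (cases "-pi \<le> b' - 2 * pi")
      case True2: True
      then have "b' = pi" using True by simp
      then show ?thesis using ab' True2 ca cb by (simp add: m cpi)
    next
      case False
      then show ?thesis using ab' ca cb m by simp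
    qed
  next
    case False
    have m: "min b' pi = pi" using False by simp
    have "a' \<le> pi" "-pi \<le> b' - 2 * pi" using a'r False by auto
    then show ?thesis using ca cb cb2 m cpi by (simp add: diff_divide_distrib)
  qed
  show ?thesis using sum unfolding val .
qed

lemma S_o_image: "S_o n = (\<lambda>k. 2 * k + 1) ` {..<n}"
proof (intro set_eqI iffI)
  fix j assume "j \<in> S_o n"
  then have j: "odd j" "1 \<le> j" "j \<le> 2 * n - 1" by (auto simp: S_o_def)
  then obtain k where k: "j = 2 * k + 1" by (metis oddE)
  then have "k < n" using j by simp
  then show "j \<in> (\<lambda>k. 2 * k + 1) ` {..<n}" using k by auto
next
  fix j assume "j \<in> (\<lambda>k. 2 * k + 1) ` {..<n}"
  then obtain k where k: "k < n" "j = 2 * k + 1" by auto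
  then show "j \<in> S_o n" by (auto simp: S_o_def)
qed

lemma sum_S_o: "(\<Sum>j\<in>S_o n. f j) = (\<Sum>k<n. f (2 * k + 1))"
proof -
  have "inj_on (\<lambda>k::nat. 2 * k + 1) {..<n}" by (auto simp: inj_on_def)
  then show ?thesis unfolding S_o_image by (simp add: sum.reindex)
qed

lemma integral_gsin:
  assumes g: "good n \<I>" and j: "j > 0"
  shows "integral {-pi..pi} (\<lambda>\<theta>. g_col \<I> \<alpha> \<theta> * sin (real j * \<theta>)) =
         (\<Sum>I\<in>\<I>. \<alpha> I * ((cos (real j * ea I) - cos (real j * eb I)) / real j))"
proof -
  have fin: "finite \<I>" by (rule good_fin[OF g])
  have each: "((\<lambda>\<theta>. \<alpha> I * (indicator I \<theta> * sin (real j * \<theta>))) has_integral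
        \<alpha> I * ((cos (real j * ea I) - cos (real j * eb I)) / real j)) {-pi..pi}" if I: "I \<in> \<I>" for I
  proof -
    note r = good_rep[OF g I]
    have "((\<lambda>x. indicator (arc (ea I) (eb I)) x * sin (real j * x)) has_integral
          (cos (real j * ea I) - cos (real j * eb I)) / real j) {-pi..pi}"
      by (rule arc_indicator_integral[OF j r(1) r(6)])
    then have "((\<lambda>x. indicator I x * sin (real j * x)) has_integral
          (cos (real j * ea I) - cos (real j * eb I)) / real j) {-pi..pi}"
      using r(4) by simp
    then show ?thesis by (rule has_integral_mult_right)
  qed
  have "((\<lambda>\<theta>. \<Sum>I\<in>\<I>. \<alpha> I * (indicator I \<theta> * sin (real j * \<theta>))) has_integral
        (\<Sum>I\<in>\<I>. \<alpha> I * ((cos (real j * ea I) - cos (real j * eb I)) / real j))) {-pi..pi}"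
    by (rule has_integral_sum[OF fin each])
  moreover have "(\<lambda>\<theta>. \<Sum>I\<in>\<I>. \<alpha> I * (indicator I \<theta> * sin (real j * \<theta>))) = (\<lambda>\<theta>. g_col \<I> \<alpha> \<theta> * sin (real j * \<theta>))"
    unfolding g_col_def by (simp add: sum_distrib_right mult.assoc)
  ultimately show ?thesis by (simp add: integral_unique)
qed

lemma trig3: "(cos A - cos B) * sin T =
   (sin (B - T) - sin (A - T) - (sin (B + T) - sin (A + T))) / (2::real)"
  by (simp add: sin_diff sin_add algebra_simps)

lemma trig_term: "(cos (c * a) - cos (c * b)) * sin (c * t) =
   (sin (c * (b - t)) - sin (c * (a - t)) - (sin (c * (b + t)) - sin (c * (a + t)))) / (2::real)"
  unfolding right_diff_distrib distrib_left by (rule trig3)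

lemma per_I:
  "(\<Sum>k<n. (cos (real (2*k+1) * a) - cos (real (2*k+1) * b)) / real (2*k+1) * sin (real (2*k+1) * t))
   = ((Pf n (b - t) - Pf n (a - t)) - (Pf n (b + t) - Pf n (a + t))) / 2"
proof -
  have "(\<Sum>k<n. (cos (real (2*k+1) * a) - cos (real (2*k+1) * b)) / real (2*k+1) * sin (real (2*k+1) * t))
    = (\<Sum>k<n. (sin (real (2*k+1) * (b - t)) / real (2*k+1) - sin (real (2*k+1) * (a - t)) / real (2*k+1)
          - (sin (real (2*k+1) * (b + t)) / real (2*k+1) - sin (real (2*k+1) * (a + t)) / real (2*k+1))) / 2)"
  proof (rule sum.cong[OF refl])
    fix k
    have "(cos (real (2*k+1) * a) - cos (real (2*k+1) * b)) / real (2*k+1) * sin (real (2*k+1) * t)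
       = ((cos (real (2*k+1) * a) - cos (real (2*k+1) * b)) * sin (real (2*k+1) * t)) / real (2*k+1)" by simp
    also have "\<dots> = ((sin (real (2*k+1) * (b - t)) - sin (real (2*k+1) * (a - t)) - (sin (real (2*k+1) * (b + t)) - sin (real (2*k+1) * (a + t)))) / 2) / real (2*k+1)"
      by (simp only: trig_term)
    also have "\<dots> = (sin (real (2*k+1) * (b - t)) / real (2*k+1) - sin (real (2*k+1) * (a - t)) / real (2*k+1)
          - (sin (real (2*k+1) * (b + t)) / real (2*k+1) - sin (real (2*k+1) * (a + t)) / real (2*k+1))) / 2"
      by (simp add: diff_divide_distrib)
    finally show "(cos (real (2*k+1) * a) - cos (real (2*k+1) * b)) / real (2*k+1) * sin (real (2*k+1) * t)
       = (sin (real (2*k+1) * (b - t)) / real (2*k+1) - sin (real (2*k+1) * (a - t)) / real (2*k+1)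
          - (sin (real (2*k+1) * (b + t)) / real (2*k+1) - sin (real (2*k+1) * (a + t)) / real (2*k+1))) / 2" .
  qed
  also have "\<dots> = ((Pf n (b - t) - Pf n (a - t)) - (Pf n (b + t) - Pf n (a + t))) / 2"
    unfolding Pf_def by (simp add: sum_divide_distrib[symmetric] sum_subtractf)
  finally show ?thesis .
qed

lemma shat_formula:
  assumes g: "good n \<I>"
  shows "s_hat n \<I> \<alpha> \<theta> = K * sqrt (real n) * (Tf n \<I> \<alpha> \<theta> - Tf n \<I> \<alpha> (-\<theta>)) / 2"
proof -
  have fin: "finite \<I>" by (rule good_fin[OF g])
  have "s_hat n \<I> \<alpha> \<theta> = (\<Sum>k<n. eps_hat n \<I> \<alpha> (2*k+1) * sin (real (2*k+1) * \<theta>))"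
    unfolding s_hat_def by (rule sum_S_o)
  also have "\<dots> = (\<Sum>k<n. K * sqrt (real n) * (\<Sum>I\<in>\<I>. \<alpha> I * ((cos (real (2*k+1) * ea I) - cos (real (2*k+1) * eb I)) / real (2*k+1))) * sin (real (2*k+1) * \<theta>))"
    unfolding eps_hat_def by (subst integral_gsin[OF g]) auto
  also have "\<dots> = K * sqrt (real n) * (\<Sum>I\<in>\<I>. \<alpha> I * (\<Sum>k<n. (cos (real (2*k+1) * ea I) - cos (real (2*k+1) * eb I)) / real (2*k+1) * sin (real (2*k+1) * \<theta>)))"
    by (simp add: sum_distrib_left sum_distrib_right mult.assoc sum.swap[of _ "{..<n}" \<I>])
  also have "\<dots> = K * sqrt (real n) * (\<Sum>I\<in>\<I>. \<alpha> I * ((cJ n I \<theta> - cJ n I (-\<theta>)) / 2))"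
    unfolding cJ_def per_I by (simp add: algebra_simps)
  also have "\<dots> = K * sqrt (real n) * (Tf n \<I> \<alpha> \<theta> - Tf n \<I> \<alpha> (-\<theta>)) / 2"
    unfolding Tf_def by (simp add: sum_subtractf[symmetric] sum_divide_distrib[symmetric] algebra_simps)
  finally show ?thesis .
qed



lemma ws_good:
  assumes ws: "well_separated n t \<I>" and n: "n \<ge> 14"
  shows "good n \<I>"
proof -
  have su: "suitable n t \<I>" using ws by (simp add: well_separated_def)
  have fin: "finite \<I>" using su by (simp add: suitable_def)
  have ep: "\<forall>I\<in>\<I>. arc_endpoints_in n I" using su by (simp add: suitable_def)
  have inv: "\<forall>I\<in>\<I>. (\<lambda>\<theta>. pi + \<theta>) ` I \<in> \<I> \<and> (\<lambda>\<theta>. pi - \<theta>) ` I \<in> \<I>" using su by (simp add: suitable_def)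
  have dj: "\<forall>I\<in>\<I>. \<forall>J\<in>\<I>. I \<noteq> J \<longrightarrow> I \<inter> J = {}" using su by (simp add: suitable_def)
  have len: "\<forall>I\<in>\<I>. arc_length_le (6 * pi / real n) I" using ws by (simp add: well_separated_def)
  have sep: "\<forall>I\<in>\<I>. \<forall>J\<in>\<I>. I \<noteq> J \<longrightarrow> (\<forall>x\<in>I. \<forall>y\<in>J. \<bar>x - y\<bar> \<ge> pi / real n)"
    using ws by (simp add: well_separated_def)
  have reps: "\<exists>a b. a < b \<and> b - a \<le> 6 * pi / real n \<and> J = arc a b \<and> (\<exists>m::int. b - a = of_int m * pi / real n)"
    if J: "J \<in> \<I>" for J
  proof -
    have e1: "arc_endpoints_in n J" using ep J by blast
    then obtain a b where ab0: "a < b" "b - a < 2 * pi" "J = arc a b"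
       "\<exists>p::int. a = of_int p * pi / real n" "\<exists>q::int. b = of_int q * pi / real n"
      unfolding arc_endpoints_in_def by auto
    obtain p :: int where p: "a = of_int p * pi / real n" using ab0(4) by blast
    obtain q :: int where q: "b = of_int q * pi / real n" using ab0(5) by blast
    note ab = ab0(1-3) p q
    have e2: "arc_length_le (6 * pi / real n) J" using len J by blast
    then obtain a' b' where ab': "a' < b'" "b' - a' < 2 * pi" "J = arc a' b'" "b' - a' \<le> 6 * pi / real n"
      unfolding arc_length_le_def by auto
    have eqarc: "arc a b = arc a' b'" using ab(3) ab'(3) by simp
    obtain k :: int where k: "a' = a + 2 * pi * of_int k" "b' = b + 2 * pi * of_int k"
      using arc_unique[OF ab(1) ab(2) ab'(1) ab'(2) eqarc] by blast
    have "b - a = of_int (q - p) * pi / real n" using ab by (simp add: left_diff_distrib diff_divide_distrib)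
    moreover have "b - a \<le> 6 * pi / real n" using ab' k by simp
    ultimately show ?thesis using ab by blast
  qed
  show ?thesis unfolding good_def
  proof (intro conjI)
    show "14 \<le> n" by (rule n)
    show "finite \<I>" by (rule fin)
    show "\<forall>J\<in>\<I>. \<exists>a b. a < b \<and> b - a \<le> 6 * pi / real n \<and> J = arc a b \<and> (\<exists>m::int. b - a = of_int m * pi / real n)"
      using reps by blast
    show "\<forall>J\<in>\<I>. (\<lambda>\<theta>. pi + \<theta>) ` J \<in> \<I>" using inv by blast
    show "\<forall>I\<in>\<I>. \<forall>J\<in>\<I>. I \<noteq> J \<longrightarrow> I \<inter> J = {}" by (rule dj)
    show "\<forall>I\<in>\<I>. \<forall>J\<in>\<I>. I \<noteq> J \<longrightarrow> (\<forall>x\<in>I. \<forall>y\<in>J. pi / real n \<le> \<bar>x - y\<bar>)" by (rule sep)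
  qed
qed

theorem main_result:
  assumes n: "n \<ge> 14" and ws: "well_separated n t \<I>" and sc: "symmetric_colouring \<I> \<alpha>"
  shows "(\<forall>\<theta>\<in>\<Union>\<I>. \<bar>s_hat n \<I> \<alpha> \<theta>\<bar> \<ge> 2 * K * sqrt (real n) / 3) \<and>
         (\<forall>\<theta>::real. \<bar>s_hat n \<I> \<alpha> \<theta>\<bar> \<le> 5 * K * sqrt (real n))"
proof -
  have g: "good n \<I>" by (rule ws_good[OF ws n])
  have su: "suitable n t \<I>" using ws by (simp add: well_separated_def)
  have inv: "\<forall>I\<in>\<I>. (\<lambda>\<theta>. pi + \<theta>) ` I \<in> \<I> \<and> (\<lambda>\<theta>. pi - \<theta>) ` I \<in> \<I>" using su by (simp add: suitable_def)
  have c1: "\<forall>I\<in>\<I>. \<alpha> I \<in> {-1, 1}" using sc by (simp add: symmetric_colouring_def)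
  have c2: "\<forall>I\<in>\<I>. \<alpha> ((\<lambda>\<theta>. pi - \<theta>) ` I) = \<alpha> I" using sc by (simp add: symmetric_colouring_def)
  have c3: "\<forall>I\<in>\<I>. \<alpha> ((\<lambda>\<theta>. pi + \<theta>) ` I) = - \<alpha> I" using sc by (simp add: symmetric_colouring_def)
  define \<beta> where "\<beta> = (\<lambda>J. if J \<in> \<I> then \<alpha> J else 0)"
  have Teq: "Tf n \<I> \<alpha> \<phi> = Tf n \<I> \<beta> \<phi>" for \<phi> unfolding Tf_def \<beta>_def by (rule sum.cong) auto
  have bl: "\<forall>J. \<bar>\<beta> J\<bar> \<le> 1" using c1 unfolding \<beta>_def by auto
  have Kp: "K > 0" by (simp add: K_def)
  have sq: "sqrt (real n) > 0" using n by simp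
  define KS where "KS = K * sqrt (real n)"
  have KSp: "KS > 0" unfolding KS_def using Kp sq by simp
  have sh: "s_hat n \<I> \<alpha> \<theta> = KS * (Tf n \<I> \<beta> \<theta> - Tf n \<I> \<beta> (-\<theta>)) / 2" for \<theta>
    unfolding KS_def shat_formula[OF g] Teq ..
  have upper: "\<bar>s_hat n \<I> \<alpha> \<theta>\<bar> \<le> 5 * K * sqrt (real n)" for \<theta>
  proof -
    have "\<bar>Tf n \<I> \<beta> \<theta> - Tf n \<I> \<beta> (-\<theta>)\<bar> \<le> 10"
      using T_upper[OF g bl, of \<theta>] T_upper[OF g bl, of "-\<theta>"] by linarith
    then have "KS * \<bar>Tf n \<I> \<beta> \<theta> - Tf n \<I> \<beta> (-\<theta>)\<bar> \<le> KS * 10" using KSp by (intro mult_left_mono) auto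
    then show ?thesis unfolding sh KS_def using Kp sq by (simp add: abs_mult)
  qed
  have lower: "\<bar>s_hat n \<I> \<alpha> \<theta>\<bar> \<ge> 2 * K * sqrt (real n) / 3" if th: "\<theta> \<in> \<Union>\<I>" for \<theta>
  proof -
    obtain I where I: "I \<in> \<I>" "\<theta> \<in> I" using th by blast
    define I1 where "I1 = (\<lambda>x. pi + x) ` I"
    define I3 where "I3 = (\<lambda>x. pi - x) ` I1"
    have I1: "I1 \<in> \<I>" unfolding I1_def using inv I by blast
    have I3: "I3 \<in> \<I>" unfolding I3_def using inv I1 by blast
    have th3: "- \<theta> \<in> I3" unfolding I3_def I1_def using I(2)
      by (auto simp: image_iff intro!: bexI[of _ "pi + \<theta>"])
    have a1: "\<alpha> I1 = - \<alpha> I" unfolding I1_def using c3 I by blast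
    have a3: "\<alpha> I3 = - \<alpha> I" unfolding I3_def using c2 I1 a1 by simp
    have bI: "\<beta> I = \<alpha> I" "\<beta> I3 = - \<alpha> I" using I I3 a3 unfolding \<beta>_def by auto
    have sqI: "\<alpha> I * \<alpha> I = 1" using c1 I by auto
    have pI: "\<beta> ((\<lambda>x. pi + x) ` I) = - \<beta> I" using I1 a1 I unfolding \<beta>_def I1_def by auto
    have pI3: "\<beta> ((\<lambda>x. pi + x) ` I3) = - \<beta> I3"
    proof -
      have "(\<lambda>x. pi + x) ` I3 \<in> \<I>" using inv I3 by blast
      then show ?thesis using c3 I3 unfolding \<beta>_def by auto
    qed
    have L1: "\<beta> I * Tf n \<I> \<beta> \<theta> \<ge> 2 / 3"
      by (rule T_lower[OF g I(1) I(2) bl]) (use bI sqI pI in auto)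
    have L2: "\<beta> I3 * Tf n \<I> \<beta> (-\<theta>) \<ge> 2 / 3"
      by (rule T_lower[OF g I3 th3 bl]) (use bI sqI pI3 in auto)
    have "\<alpha> I * (Tf n \<I> \<beta> \<theta> - Tf n \<I> \<beta> (-\<theta>)) \<ge> 4 / 3"
      using L1 L2 bI by (simp add: algebra_simps)
    moreover have "\<bar>\<alpha> I\<bar> = 1" using c1 I by auto
    ultimately have "\<bar>Tf n \<I> \<beta> \<theta> - Tf n \<I> \<beta> (-\<theta>)\<bar> \<ge> 4 / 3"
      by (metis abs_ge_self abs_mult mult_1 order_trans)
    then have "KS * \<bar>Tf n \<I> \<beta> \<theta> - Tf n \<I> \<beta> (-\<theta>)\<bar> \<ge> KS * (4 / 3)" using KSp by (intro mult_left_mono) auto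
    then show ?thesis unfolding sh KS_def using Kp sq by (simp add: abs_mult)
  qed
  show ?thesis using upper lower by blast
qed

theorem lemma5p6:
  shows "\<exists>N0::nat. \<forall>n\<ge>N0. \<forall>(t::int) (\<I>::real set set) (\<alpha>::real set \<Rightarrow> real).
     odd t \<and> 2 powr (-43) < gamma n t \<and> gamma n t \<le> 2 powr (-40) \<and>
     well_separated n t \<I> \<and> symmetric_colouring \<I> \<alpha> \<and>
     (\<forall>j\<in>S_o n. \<bar>eps_hat n \<I> \<alpha> j\<bar> \<le> 1)
     \<longrightarrow> (\<forall>\<theta>\<in>\<Union>\<I>. \<bar>s_hat n \<I> \<alpha> \<theta>\<bar> \<ge> 2 * K * sqrt (real n) / 3) \<and>
         (\<forall>\<theta>::real. \<bar>s_hat n \<I> \<alpha> \<theta>\<bar> \<le> 5 * K * sqrt (real n))"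
proof (intro exI[of _ 14] allI impI)
  fix n :: nat and t :: int and \<I> :: "real set set" and \<alpha> :: "real set \<Rightarrow> real"
  assume n: "n \<ge> 14"
  assume h: "odd t \<and> 2 powr (-43) < gamma n t \<and> gamma n t \<le> 2 powr (-40) \<and>
     well_separated n t \<I> \<and> symmetric_colouring \<I> \<alpha> \<and> (\<forall>j\<in>S_o n. \<bar>eps_hat n \<I> \<alpha> j\<bar> \<le> 1)"
  then have ws: "well_separated n t \<I>" and sc: "symmetric_colouring \<I> \<alpha>" by auto
  show "(\<forall>\<theta>\<in>\<Union>\<I>. \<bar>s_hat n \<I> \<alpha> \<theta>\<bar> \<ge> 2 * K * sqrt (real n) / 3) \<and>
         (\<forall>\<theta>::real. \<bar>s_hat n \<I> \<alpha> \<theta>\<bar> \<le> 5 * K * sqrt (real n))"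
    by (rule main_result[OF n ws sc])
qed


end
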